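(* For every constant $c>0$ there exist constants $C,a>0$ such that the following holds. Let $G=(V,E)$ be a $d$-regular undirected graph on $n=|V|$ vertices, $2\le d<n$, which is a $\lambda$ spectral expander with $\lambda>0$ and $n\ge c\,d^3\log(d)^4/\lambda$. Then the graph code $(\mathrm{enc}_G,\mathrm{dec}_G)$ is an $\varepsilon$-non-malleable code in the split-state model with $\varepsilon\le C\,\log(d)^a\,\frac{\lambda^{3/2}}{d}$. (In the paper's notation: if $n=\Omega(d^3\log(d)^4/\lambda)$ then the code is $\tilde O(\lambda^{3/2}/d)$-non-malleable.)
   Context: $E\subseteq V\times V$ is the symmetric set of ordered pairs of adjacent vertices. $G$ is a $\lambda$ spectral expander if, with $\lambda_1\ge\dots\ge\lambda_n$ the eigenvalues of its adjacency matrix, $\lambda\ge\max\{|\lambda_2|,\dots,|\lambda_n|\}$. The graph code: $\mathrm{enc}_G\colon\{0,1\}\to V\times V$ is randomized, with $\mathrm{enc}_G(0)$ uniform on $(V\times V)\setminus E$ and $\mathrm{enc}_G(1)$ uniform on $E$; $\mathrm{dec}_G(v_1,v_2)=1$ if $(v_1,v_2)\in E$ and $0$ otherwise. Split-state non-malleability: a coding scheme $\mathrm{enc}\colon\mathcal M\to\mathcal L\times\mathcal R$, $\mathrm{dec}\colon\mathcal L\times\mathcal R\to\mathcal M\cup\{\bot\}$ (here $\mathcal M=\{0,1\}$, $\mathcal L=\mathcal R=V$) with $\Pr[\mathrm{dec}(\mathrm{enc}(s))=s]=1$ is $\varepsilon$-non-malleable in the split-state model if for every pair of functions $g\colon\mathcal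 L\to\mathcal L$, $h\colon\mathcal R\to\mathcal R$ there is a distribution $D_{g,h}$ on $\mathcal M\cup\{*,\bot\}$ such that for every $s\in\mathcal M$ the random variable $\mathrm{dec}(g(L),h(R))$ with $(L,R)\leftarrow\mathrm{enc}(s)$ and the random variable obtained by sampling $\tilde s\leftarrow D_{g,h}$ and outputting $s$ if $\tilde s=*$ and $\tilde s$ otherwise, have statistical distance at most $\varepsilon$. *)

theory Defs
  imports "Jordan_Normal_Form.Char_Poly" "HOL-Probability.Probability_Mass_Function"
begin

definition regular_graph :: "nat \<Rightarrow> (nat \<times> nat) set \<Rightarrow> nat \<Rightarrow> bool" where
  "regular_graph n E d \<longleftrightarrow>
     E \<subseteq> {0..<n} \<times> {0..<n} \<and> sym E \<and> irrefl E \<and>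
     (\<forall>v\<in>{0..<n}. card {u. (v, u) \<in> E} = d)"

definition adj_mat :: "nat \<Rightarrow> (nat \<times> nat) set \<Rightarrow> real Matrix.mat" where
  "adj_mat n E = Matrix.mat n n (\<lambda>(i, j). if (i, j) \<in> E then 1 else 0)"

text \<open>Eigenvalues of the adjacency matrix, with multiplicity, listed in non-increasing order
(lambda_1 >= ... >= lambda_n): the roots of the characteristic polynomial.\<close>
definition graph_eigenvalues :: "nat \<Rightarrow> (nat \<times> nat) set \<Rightarrow> real list" where
  "graph_eigenvalues n E = rev (sorted_list_of_multiset (proots (char_poly (adj_mat n E))))"

definition spectral_expander :: "nat \<Rightarrow> (nat \<times> nat) set \<Rightarrow> real \<Rightarrow> bool" where
  "spectral_expander n E lam \<longleftrightarrow>
     (\<forall>i\<in>{1..<n}. \<bar>graph_eigenvalues n E ! i\<bar> \<le> lam)"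

definition stat_dist :: "'a pmf \<Rightarrow> 'a pmf \<Rightarrow> real" where
  "stat_dist p q = (SUP A. \<bar>measure_pmf.prob p A - measure_pmf.prob q A\<bar>)"

text \<open>Output of the simulator distribution D: a message, the symbol * (same), or bottom.\<close>
datatype 'm nm_out = Msg 'm | Same | Bot

definition nm_outcome :: "'m \<Rightarrow> 'm nm_out \<Rightarrow> 'm option" where
  "nm_outcome s t = (case t of Msg m \<Rightarrow> Some m | Same \<Rightarrow> Some s | Bot \<Rightarrow> None)"

definition split_state_nm ::
  "('m \<Rightarrow> ('l \<times> 'r) pmf) \<Rightarrow> ('l \<Rightarrow> 'r \<Rightarrow> 'm option) \<Rightarrow> 'l set \<Rightarrow> 'r set \<Rightarrow> real \<Rightarrow> bool" where
  "split_state_nm enc dec L R eps \<longleftrightarrow>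
     (\<forall>s. set_pmf (enc s) \<subseteq> L \<times> R \<and>
          measure_pmf.prob (enc s) {(l, r). dec l r = Some s} = 1) \<and>
     (\<forall>g h. (\<forall>x\<in>L. g x \<in> L) \<longrightarrow> (\<forall>y\<in>R. h y \<in> R) \<longrightarrow>
        (\<exists>D :: 'm nm_out pmf. \<forall>s.
           stat_dist (map_pmf (\<lambda>(l, r). dec (g l) (h r)) (enc s))
                     (map_pmf (nm_outcome s) D) \<le> eps))"

section \<open>The graph code (message False = 0, True = 1)\<close>

definition graph_enc :: "nat \<Rightarrow> (nat \<times> nat) set \<Rightarrow> bool \<Rightarrow> (nat \<times> nat) pmf" where
  "graph_enc n E b = (if b then pmf_of_set E
                      else pmf_of_set (({0..<n} \<times> {0..<n}) - E))"

definition graph_dec :: "(nat \<times> nat) set \<Rightarrow> nat \<Rightarrow> nat \<Rightarrow> bool option" where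
  "graph_dec E v1 v2 = Some ((v1, v2) \<in> E)"

end

theory Submission
  imports Defs "Jordan_Normal_Form.Schur_Decomposition"
begin

lemma sym_real_eig:
  fixes A :: "real mat"
  assumes A: "A \<in> carrier_mat n n" and sym: "\<And>i j. i < n \<Longrightarrow> j < n \<Longrightarrow> A$$(i,j) = A$$(j,i)"
    and ev: "eigenvalue (map_mat complex_of_real A) e"
  shows "Im e = 0"
proof -
  let ?Ac = "map_mat complex_of_real A"
  obtain v where v: "v \<in> carrier_vec n" "v \<noteq> 0\<^sub>v n" "?Ac *\<^sub>v v = e \<cdot>\<^sub>v v"
    using ev A unfolding eigenvalue_def eigenvector_def by auto
  have dv: "dim_vec v = n" using v(1) by auto
  have rowi: "(\<Sum>j<n. of_real (A$$(i,j)) * v$j) = e * v$i" if "i < n" for i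
  proof -
    have "(?Ac *\<^sub>v v) $ i = e * v$i" using v(3) that dv by simp
    moreover have "(?Ac *\<^sub>v v) $ i = (\<Sum>j<n. of_real (A$$(i,j)) * v$j)"
      using that A dv by (simp add: scalar_prod_def lessThan_atLeast0)
    ultimately show ?thesis by simp
  qed
  define S where "S = (\<Sum>i<n. cnj (v$i) * (\<Sum>j<n. of_real (A$$(i,j)) * v$j))"
  have S1: "S = e * (\<Sum>i<n. cnj (v$i) * v$i)"
  proof -
    have "S = (\<Sum>i<n. cnj (v$i) * (e * v$i))" unfolding S_def by (intro sum.cong refl, simp add: rowi)
    thus ?thesis by (simp add: sum_distrib_left mult.commute mult.left_commute)
  qed
  have "cnj S = (\<Sum>i<n. \<Sum>j<n. v$i * of_real (A$$(i,j)) * cnj (v$j))"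
    unfolding S_def by (simp add: sum_distrib_left mult.assoc)
  also have "\<dots> = (\<Sum>j<n. \<Sum>i<n. v$i * of_real (A$$(i,j)) * cnj (v$j))"
    by (rule sum.swap)
  also have "\<dots> = S"
    unfolding S_def sum_distrib_left
    by (intro sum.cong refl, auto simp: sym mult.commute mult.left_commute)
  finally have "Im S = 0" by (metis Im_complex_of_real complex_cnj_complex_of_real complex_is_Real_iff Reals_cnj_iff)
  have vsum: "(\<Sum>i<n. cnj (v$i) * v$i) = of_real (\<Sum>i<n. (cmod (v$i))^2)"
    unfolding of_real_sum by (intro sum.cong refl) (metis complex_norm_square mult.commute)
  obtain i where i: "i < n" "v$i \<noteq> 0"
    using v(1,2) by (metis dv eq_vecI index_zero_vec(1) index_zero_vec(2) carrier_vecD)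
  have "(\<Sum>i<n. (cmod (v$i))^2) > 0"
    by (rule sum_pos2[of _ i]) (use i in auto)
  moreover have "Im S = Im e * (\<Sum>i<n. (cmod (v$i))^2)" using S1 vsum by simp
  ultimately show ?thesis using \<open>Im S = 0\<close> by simp
qed

interpretation of_real_poly_hom: map_poly_inj_comm_ring_hom "of_real :: real \<Rightarrow> complex" ..

lemma adj_mat_carrier: "adj_mat n E \<in> carrier_mat n n"
  unfolding adj_mat_def by simp

lemma adj_mat_index: "i < n \<Longrightarrow> j < n \<Longrightarrow> adj_mat n E $$ (i,j) = (if (i,j) \<in> E then 1 else 0)"
  unfolding adj_mat_def by simp

lemma real_split:
  fixes A :: "real mat"
  assumes A: "A \<in> carrier_mat n n" and sym: "\<And>i j. i < n \<Longrightarrow> j < n \<Longrightarrow> A$$(i,j) = A$$(j,i)"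
  shows "\<exists>rs. char_poly A = (\<Prod>r\<leftarrow>rs. [:- r, 1:]) \<and> length rs = n"
proof -
  let ?Ac = "map_mat complex_of_real A"
  have Ac: "?Ac \<in> carrier_mat n n" using A by simp
  obtain as where as: "char_poly ?Ac = (\<Prod>a\<leftarrow>as. [:- a, 1:])" "length as = n"
    using char_poly_factorized[OF Ac] by blast
  have re: "Im a = 0" if "a \<in> set as" for a
  proof -
    have "poly (char_poly ?Ac) a = 0" unfolding as(1) by (rule linear_poly_root[OF that])
    hence "eigenvalue ?Ac a" using eigenvalue_root_char_poly[OF Ac] by simp
    thus ?thesis using sym_real_eig[OF A] sym by blast
  qed
  define rs where "rs = map Re as"
  have "map_poly complex_of_real (char_poly A) = char_poly ?Ac"
    using of_real_hom.char_poly_hom[OF A, where 'a=complex] by simp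
  also have "\<dots> = (\<Prod>a\<leftarrow>as. [:- of_real (Re a), 1:])"
    unfolding as(1) by (intro arg_cong[where f=prod_list] map_cong refl) (use re complex_eqI in auto)
  also have "\<dots> = map_poly complex_of_real (\<Prod>r\<leftarrow>rs. [:- r, 1:])"
    unfolding of_real_poly_hom.hom_prod_list rs_def by (simp add: o_def)
  finally have "char_poly A = (\<Prod>r\<leftarrow>rs. [:- r, 1:])"
    by (rule of_real_poly_hom.injectivity)
  thus ?thesis using as(2) rs_def by (intro exI[of _ rs]) auto
qed


lemma mult_index:
  assumes "X \<in> carrier_mat a b" "Y \<in> carrier_mat b c" "i < a" "j < c"
  shows "(X * Y) $$ (i,j) = (\<Sum>l<b. X $$ (i,l) * Y $$ (l,j))"
  using assms by (simp add: scalar_prod_def lessThan_atLeast0)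

lemma upper_pow:
  fixes B :: "'a::comm_ring_1 mat"
  assumes B: "B \<in> carrier_mat n n" and ut: "upper_triangular B"
  shows "(\<forall>i<n. \<forall>j<i. (B ^\<^sub>m k) $$ (i,j) = 0) \<and> (\<forall>i<n. (B ^\<^sub>m k) $$ (i,i) = B $$ (i,i) ^ k)"
proof (induction k)
  case 0
  then show ?case using B by auto
next
  case (Suc k)
  have Bk: "B ^\<^sub>m k \<in> carrier_mat n n" using B by simp
  have ut': "B $$ (i,j) = 0" if "i < n" "j < i" for i j using ut that B by auto
  have "(B ^\<^sub>m Suc k) $$ (i,j) = 0" if "i < n" "j < i" for i j
  proof -
    have "(B ^\<^sub>m Suc k) $$ (i,j) = (\<Sum>l<n. (B ^\<^sub>m k) $$ (i,l) * B $$ (l,j))"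
      using mult_index[OF Bk B] that by simp
    also have "\<dots> = 0"
    proof (intro sum.neutral ballI)
      fix l assume l: "l \<in> {..<n}"
      show "(B ^\<^sub>m k) $$ (i,l) * B $$ (l,j) = 0"
      proof (cases "l < i")
        case True thus ?thesis using Suc.IH that by auto
      next
        case False thus ?thesis using ut'[of l j] that l by auto
      qed
    qed
    finally show ?thesis .
  qed
  moreover have "(B ^\<^sub>m Suc k) $$ (i,i) = B $$ (i,i) ^ Suc k" if "i < n" for i
  proof -
    have "(B ^\<^sub>m Suc k) $$ (i,i) = (\<Sum>l<n. (B ^\<^sub>m k) $$ (i,l) * B $$ (l,i))"
      using mult_index[OF Bk B] that by simp
    also have "\<dots> = (B ^\<^sub>m k) $$ (i,i) * B $$ (i,i) + (\<Sum>l\<in>{..<n}-{i}. (B ^\<^sub>m k) $$ (i,l) * B $$ (l,i))"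
      by (rule sum.remove) (use that in auto)
    also have "(\<Sum>l\<in>{..<n}-{i}. (B ^\<^sub>m k) $$ (i,l) * B $$ (l,i)) = 0"
    proof (intro sum.neutral ballI)
      fix l assume l: "l \<in> {..<n}-{i}"
      show "(B ^\<^sub>m k) $$ (i,l) * B $$ (l,i) = 0"
      proof (cases "l < i")
        case True thus ?thesis using Suc.IH that by auto
      next
        case False thus ?thesis using ut'[of l i] that l by auto
      qed
    qed
    finally show ?thesis using Suc.IH that by simp
  qed
  ultimately show ?case by auto
qed


lemma trace_sim:
  fixes P M Q :: "'a::comm_ring_1 mat"
  assumes P: "P \<in> carrier_mat n n" and M: "M \<in> carrier_mat n n" and Q: "Q \<in> carrier_mat n n"
    and QP: "Q * P = 1\<^sub>m n"
  shows "(\<Sum>i<n. (P * M * Q) $$ (i,i)) = (\<Sum>i<n. M $$ (i,i))"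
proof -
  have PM: "P * M \<in> carrier_mat n n" using P M by simp
  have "(\<Sum>i<n. (P * M * Q) $$ (i,i)) = (\<Sum>i<n. \<Sum>m<n. (\<Sum>l<n. P $$ (i,l) * M $$ (l,m)) * Q $$ (m,i))"
    by (intro sum.cong refl) (simp add: mult_index[OF PM Q] mult_index[OF P M])
  also have "\<dots> = (\<Sum>i<n. \<Sum>m<n. \<Sum>l<n. P $$ (i,l) * M $$ (l,m) * Q $$ (m,i))"
    by (simp add: sum_distrib_right)
  also have "\<dots> = (\<Sum>i<n. \<Sum>l<n. \<Sum>m<n. P $$ (i,l) * M $$ (l,m) * Q $$ (m,i))"
    by (intro sum.cong refl sum.swap)
  also have "\<dots> = (\<Sum>l<n. \<Sum>i<n. \<Sum>m<n. P $$ (i,l) * M $$ (l,m) * Q $$ (m,i))"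
    by (rule sum.swap)
  also have "\<dots> = (\<Sum>l<n. \<Sum>m<n. \<Sum>i<n. P $$ (i,l) * M $$ (l,m) * Q $$ (m,i))"
    by (intro sum.cong refl sum.swap)
  also have "\<dots> = (\<Sum>l<n. \<Sum>m<n. M $$ (l,m) * (\<Sum>i<n. Q $$ (m,i) * P $$ (i,l)))"
    by (simp add: sum_distrib_left mult_ac)
  also have "\<dots> = (\<Sum>l<n. \<Sum>m<n. M $$ (l,m) * (if m = l then 1 else 0))"
  proof (intro sum.cong refl)
    fix l m assume "l \<in> {..<n}" "m \<in> {..<n}"
    hence "(Q * P) $$ (m,l) = (\<Sum>i<n. Q $$ (m,i) * P $$ (i,l))" using mult_index[OF Q P] by simp
    with QP \<open>l \<in> {..<n}\<close> \<open>m \<in> {..<n}\<close> show "M $$ (l,m) * (\<Sum>i<n. Q $$ (m,i) * P $$ (i,l)) = M $$ (l,m) * (if m = l then 1 else 0)"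
      by auto
  qed
  also have "\<dots> = (\<Sum>i<n. M $$ (i,i))" by (simp add: if_distrib cong: if_cong)
  finally show ?thesis .
qed

lemma trace_pow:
  fixes A :: "real mat"
  assumes A: "A \<in> carrier_mat n n" and cp: "char_poly A = (\<Prod>r\<leftarrow>rs. [:- r, 1:])"
  shows "(\<Sum>i<n. (A ^\<^sub>m k) $$ (i,i)) = (\<Sum>r\<leftarrow>rs. r ^ k)"
proof -
  obtain B P Q where sd: "schur_decomposition A rs = (B,P,Q)" by (cases "schur_decomposition A rs") auto
  from schur_decomposition[OF A cp sd] have sim: "similar_mat_wit A B P Q" and ut: "upper_triangular B"
    and dg: "diag_mat B = rs" by auto
  from sim A have B: "B \<in> carrier_mat n n" and P: "P \<in> carrier_mat n n" and Q: "Q \<in> carrier_mat n n"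
    and QP: "Q * P = 1\<^sub>m n"
    unfolding similar_mat_wit_def Let_def by auto
  have "A ^\<^sub>m k = P * B ^\<^sub>m k * Q" by (rule similar_mat_wit_pow_id[OF sim])
  hence "(\<Sum>i<n. (A ^\<^sub>m k) $$ (i,i)) = (\<Sum>i<n. (B ^\<^sub>m k) $$ (i,i))"
    using trace_sim[OF P _ Q QP, of "B ^\<^sub>m k"] B by simp
  also have "\<dots> = (\<Sum>i<n. B $$ (i,i) ^ k)" using upper_pow[OF B ut, of k] by simp
  also have "\<dots> = (\<Sum>r\<leftarrow>rs. r ^ k)"
    unfolding dg[symmetric] diag_mat_def using B
    by (simp add: sum_list_sum_nth lessThan_atLeast0)
  finally show ?thesis .
qed

definition Aind :: "(nat \<times> nat) set \<Rightarrow> nat \<Rightarrow> nat \<Rightarrow> real" where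
  "Aind E x y = (if (x,y) \<in> E then 1 else 0)"

fun W :: "nat \<Rightarrow> (nat \<times> nat) set \<Rightarrow> nat \<Rightarrow> nat \<Rightarrow> nat \<Rightarrow> real" where
  "W n E 0 x y = (if x = y then 1 else 0)"
| "W n E (Suc k) x y = (\<Sum>z<n. W n E k x z * Aind E z y)"

lemma W_mat: "x < n \<Longrightarrow> y < n \<Longrightarrow> (adj_mat n E ^\<^sub>m k) $$ (x,y) = W n E k x y"
proof (induction k arbitrary: y)
  case 0
  then show ?case using adj_mat_carrier[of n E] by auto
next
  case (Suc k)
  have "(adj_mat n E ^\<^sub>m Suc k) $$ (x,y) = (\<Sum>l<n. (adj_mat n E ^\<^sub>m k) $$ (x,l) * adj_mat n E $$ (l,y))"
    using mult_index[of "adj_mat n E ^\<^sub>m k" n n "adj_mat n E" n x y] adj_mat_carrier[of n E] Suc.prems by simp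
  also have "\<dots> = W n E (Suc k) x y"
    using Suc by (simp add: adj_mat_index Aind_def)
  finally show ?case .
qed

lemma reg_facts:
  assumes "regular_graph n E d"
  shows "E \<subseteq> {..<n} \<times> {..<n}" "\<And>x y. (x,y) \<in> E \<Longrightarrow> (y,x) \<in> E" "\<And>x. (x,x) \<notin> E"
    "\<And>x. x < n \<Longrightarrow> card {y. (x,y) \<in> E} = d"
  using assms unfolding regular_graph_def sym_def irrefl_def by (auto simp: lessThan_atLeast0)

lemma Aind_sym: "regular_graph n E d \<Longrightarrow> Aind E x y = Aind E y x"
  using reg_facts(2) unfolding Aind_def by metis

lemma row_sum:
  assumes "regular_graph n E d" "x < n"
  shows "(\<Sum>y<n. Aind E x y) = d"
proof -
  have "(\<Sum>y<n. Aind E x y) = real (card ({..<n} \<inter> {y. (x,y) \<in> E}))"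
    unfolding Aind_def by (simp add: sum.If_cases)
  also have "{..<n} \<inter> {y. (x,y) \<in> E} = {y. (x,y) \<in> E}" using reg_facts(1)[OF assms(1)] by auto
  finally show ?thesis using reg_facts(4)[OF assms] by simp
qed

lemma eig_le:
  fixes A :: "real mat"
  assumes A: "A \<in> carrier_mat n n" and nn: "\<And>i j. i<n \<Longrightarrow> j<n \<Longrightarrow> A$$(i,j) \<ge> 0"
    and rs: "\<And>i. i<n \<Longrightarrow> (\<Sum>j<n. A$$(i,j)) = d"
    and ev: "eigenvalue A r"
  shows "\<bar>r\<bar> \<le> d"
proof -
  obtain v where v: "v \<in> carrier_vec n" "v \<noteq> 0\<^sub>v n" "A *\<^sub>v v = r \<cdot>\<^sub>v v"
    using ev A unfolding eigenvalue_def eigenvector_def by auto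
  have dv: "dim_vec v = n" using v(1) by auto
  have n0: "n > 0" using v dv by (metis eq_vecI index_zero_vec(2) less_nat_zero_code neq0_conv)
  define m where "m = Max ((\<lambda>j. \<bar>v$j\<bar>) ` {..<n})"
  have "m \<in> (\<lambda>j. \<bar>v$j\<bar>) ` {..<n}" unfolding m_def using n0 by (intro Max_in) auto
  then obtain i where i: "i < n" "m = \<bar>v$i\<bar>" by auto
  have mx: "\<bar>v$j\<bar> \<le> m" if "j < n" for j unfolding m_def using that by (intro Max_ge) auto
  have "v$i \<noteq> 0"
  proof
    assume "v$i = 0"
    hence "\<forall>j<n. v$j = 0" using mx i by fastforce
    hence "v = 0\<^sub>v n" using dv by (intro eq_vecI) auto
    with v(2) show False by simp
  qed
  have "r * v$i = (A *\<^sub>v v) $ i" using v(3) i dv by simp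
  also have "\<dots> = (\<Sum>j<n. A$$(i,j) * v$j)" using A i dv by (simp add: scalar_prod_def lessThan_atLeast0)
  finally have eq: "r * v$i = (\<Sum>j<n. A$$(i,j) * v$j)" .
  have "\<bar>r\<bar> * \<bar>v$i\<bar> = \<bar>\<Sum>j<n. A$$(i,j) * v$j\<bar>" by (simp add: eq[symmetric] abs_mult)
  also have "\<dots> \<le> (\<Sum>j<n. A$$(i,j) * \<bar>v$i\<bar>)"
    by (rule order.trans[OF sum_abs], rule sum_mono) (use nn i mx in \<open>auto simp: abs_mult intro: mult_left_mono\<close>)
  also have "\<dots> = d * \<bar>v$i\<bar>" using rs[OF i(1)] by (metis sum_distrib_right)
  finally show ?thesis using \<open>v$i \<noteq> 0\<close> by simp
qed

lemma sorted_le_last: "sorted xs \<Longrightarrow> x \<in> set xs \<Longrightarrow> x \<le> last xs"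
  by (induction xs) (auto simp: last_in_set)

lemma proots_lin: "proots (\<Prod>r\<leftarrow>rs. [:- r, 1:]) = mset (rs :: real list)"
proof (induction rs)
  case Nil thus ?case by simp
next
  case (Cons r rs)
  have a: "[:- r, 1:] \<noteq> 0" by simp
  have b: "(\<Prod>r\<leftarrow>rs. [:- r, 1:]) \<noteq> 0" by (auto simp: prod_list_zero_iff)
  have "proots (\<Prod>r\<leftarrow>r#rs. [:- r, 1:]) = proots ([:- r, 1:] * (\<Prod>r\<leftarrow>rs. [:- r, 1:]))" by simp
  also have "\<dots> = proots [:- r, 1:] + proots (\<Prod>r\<leftarrow>rs. [:- r, 1:])" by (rule proots_mult[OF a b])
  also have "\<dots> = mset (r#rs)" using Cons proots_linear_factor[of "-r"] by simp
  finally show ?case .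
qed

lemma graph_spec:
  assumes reg: "regular_graph n E d" and n0: "n > 0"
  shows "length (graph_eigenvalues n E) = n"
    "\<And>k. (\<Sum>x<n. W n E k x x) = (\<Sum>i<n. (graph_eigenvalues n E ! i) ^ k)"
    "graph_eigenvalues n E ! 0 = d"
proof -
  let ?A = "adj_mat n E"
  have A: "?A \<in> carrier_mat n n" by (rule adj_mat_carrier)
  have sym: "?A$$(i,j) = ?A$$(j,i)" if "i<n" "j<n" for i j
    using that reg_facts(2)[OF reg] by (auto simp: adj_mat_index)
  obtain rs where rs: "char_poly ?A = (\<Prod>r\<leftarrow>rs. [:- r, 1:])" "length rs = n"
    using real_split[OF A sym] by blast
  have pr: "proots (char_poly ?A) = mset rs"
    unfolding rs(1) by (rule proots_lin)
  let ?ge = "graph_eigenvalues n E"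
  have mge: "mset ?ge = mset rs" unfolding graph_eigenvalues_def pr by simp
  show len: "length ?ge = n" using mge rs(2) by (metis size_mset)
  show "(\<Sum>x<n. W n E k x x) = (\<Sum>i<n. (?ge ! i) ^ k)" for k
  proof -
    have "(\<Sum>x<n. W n E k x x) = (\<Sum>r\<leftarrow>rs. r ^ k)"
      using trace_pow[OF A rs(1), of k] by (simp add: W_mat)
    also have "\<dots> = (\<Sum>r\<leftarrow>?ge. r ^ k)"
      by (metis mge mset_map sum_mset_sum_list)
    also have "\<dots> = (\<Sum>i<n. (?ge ! i) ^ k)"
      using len by (simp add: sum_list_sum_nth lessThan_atLeast0)
    finally show ?thesis .
  qed
  have setge: "set ?ge = set_mset (proots (char_poly ?A))" using mge pr by (metis set_mset_mset)
  have le: "r \<le> d" if "r \<in> set ?ge" for r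
  proof -
    have cp0: "char_poly ?A \<noteq> 0" using degree_monic_char_poly[OF A] by auto
    have "poly (char_poly ?A) r = 0" using that setge set_count_proots[OF cp0] by auto
    hence ev: "eigenvalue ?A r" using eigenvalue_root_char_poly[OF A] by simp
    have "\<bar>r\<bar> \<le> real d"
      by (rule eig_le[OF A _ _ ev])
        (use row_sum[OF reg] in \<open>auto simp: adj_mat_index Aind_def\<close>)
    thus ?thesis by simp
  qed
  have din: "real d \<in> set ?ge"
  proof -
    have "?A *\<^sub>v Matrix.vec n (\<lambda>_. 1) = real d \<cdot>\<^sub>v Matrix.vec n (\<lambda>_. 1)"
      using row_sum[OF reg] A by (intro eq_vecI) (auto simp: scalar_prod_def adj_mat_index Aind_def lessThan_atLeast0)
    moreover have "Matrix.vec n (\<lambda>_. 1) \<noteq> (0\<^sub>v n :: real Matrix.vec)"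
    proof
      assume h: "Matrix.vec n (\<lambda>_. 1) = (0\<^sub>v n :: real Matrix.vec)"
      have "(Matrix.vec n (\<lambda>_. 1) :: real Matrix.vec) $ 0 = (0\<^sub>v n :: real Matrix.vec) $ 0" using h by simp
      thus False using n0 by simp
    qed
    ultimately have "eigenvector ?A (Matrix.vec n (\<lambda>_. 1)) (real d)" using A unfolding eigenvector_def
      by auto
    hence "eigenvalue ?A (real d)" unfolding eigenvalue_def by blast
    hence "poly (char_poly ?A) (real d) = 0" using eigenvalue_root_char_poly[OF A] by simp
    moreover have "char_poly ?A \<noteq> 0" using degree_monic_char_poly[OF A] by auto
    ultimately show ?thesis using setge by simp
  qed
  have ne: "?ge \<noteq> []" using len n0 by auto
  have "?ge ! 0 = last (sorted_list_of_multiset (proots (char_poly ?A)))"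
    unfolding graph_eigenvalues_def using ne unfolding graph_eigenvalues_def
    by (simp add: hd_conv_nth[symmetric] hd_rev)
  moreover have "last (sorted_list_of_multiset (proots (char_poly ?A))) \<in> set ?ge"
    using ne unfolding graph_eigenvalues_def
    by (metis last_in_set set_rev set_sorted_list_of_multiset rev_is_Nil_conv)
  moreover have "real d \<le> last (sorted_list_of_multiset (proots (char_poly ?A)))"
    by (rule sorted_le_last) (use din in \<open>auto simp: graph_eigenvalues_def\<close>)
  ultimately show "?ge ! 0 = d" using le by fastforce
qed

lemma Aind_out: "regular_graph n E d \<Longrightarrow> \<not> (x < n \<and> y < n) \<Longrightarrow> Aind E x y = 0"
  using reg_facts(1)[of n E d] unfolding Aind_def by auto

lemma delta_l: "x < (n::nat) \<Longrightarrow> (\<Sum>z<n. (if x = z then 1 else 0) * f z) = (f x :: real)"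
proof -
  assume "x < n"
  have "(\<Sum>z<n. (if x = z then 1 else 0) * f z) = (\<Sum>z<n. if z = x then f z else 0)"
    by (intro sum.cong refl) auto
  also have "\<dots> = f x" using \<open>x < n\<close> sum.delta[of "{..<n}" x f] by simp
  finally show ?thesis .
qed

lemma delta_r: "x < (n::nat) \<Longrightarrow> (\<Sum>z<n. f z * (if z = x then 1 else 0)) = (f x :: real)"
proof -
  assume "x < n"
  have "(\<Sum>z<n. f z * (if z = x then 1 else 0)) = (\<Sum>z<n. if z = x then f z else 0)"
    by (intro sum.cong refl) auto
  also have "\<dots> = f x" using \<open>x < n\<close> sum.delta[of "{..<n}" x f] by simp
  finally show ?thesis .
qed

lemma Aind_nn: "Aind E x y \<ge> 0" unfolding Aind_def by simp

lemma W_add: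
  assumes reg: "regular_graph n E d"
  shows "x < n \<Longrightarrow> y < n \<Longrightarrow> W n E (a + b) x y = (\<Sum>z<n. W n E a x z * W n E b z y)"
proof (induction b arbitrary: y)
  case 0
  then show ?case by (simp add: delta_r)
next
  case (Suc b)
  have "W n E (a + Suc b) x y = (\<Sum>z<n. W n E (a+b) x z * Aind E z y)" by simp
  also have "\<dots> = (\<Sum>z<n. (\<Sum>w<n. W n E a x w * W n E b w z) * Aind E z y)"
    using Suc by simp
  also have "\<dots> = (\<Sum>z<n. \<Sum>w<n. W n E a x w * W n E b w z * Aind E z y)"
    by (simp add: sum_distrib_right)
  also have "\<dots> = (\<Sum>w<n. \<Sum>z<n. W n E a x w * W n E b w z * Aind E z y)"
    by (rule sum.swap)
  also have "\<dots> = (\<Sum>w<n. W n E a x w * (\<Sum>z<n. W n E b w z * Aind E z y))"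
    by (simp add: sum_distrib_left mult_ac)
  also have "\<dots> = (\<Sum>w<n. W n E a x w * W n E (Suc b) w y)" by simp
  finally show ?case .
qed

lemma W_one: "x < n \<Longrightarrow> W n E 1 x y = Aind E x y"
  by (simp add: delta_l)

lemma W_sym:
  assumes reg: "regular_graph n E d"
  shows "x < n \<Longrightarrow> y < n \<Longrightarrow> W n E k x y = W n E k y x"
proof (induction k arbitrary: x y)
  case 0
  then show ?case by simp
next
  case (Suc k)
  have "W n E (Suc k) y x = W n E (1 + k) y x" by simp
  also have "\<dots> = (\<Sum>z<n. W n E 1 y z * W n E k z x)" using W_add[OF reg Suc.prems(2,1)] by blast
  also have "\<dots> = (\<Sum>z<n. W n E k x z * Aind E z y)"
  proof (intro sum.cong refl)
    fix z assume z: "z \<in> {..<n}"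
    have "W n E 1 y z = Aind E z y" using W_one[OF Suc.prems(2), of E z] Aind_sym[OF reg] by simp
    moreover have "W n E k z x = W n E k x z" using Suc z by auto
    ultimately show "W n E 1 y z * W n E k z x = W n E k x z * Aind E z y" by simp
  qed
  also have "\<dots> = W n E (Suc k) x y" by simp
  finally show ?case by simp
qed

lemma W_rowsum:
  assumes reg: "regular_graph n E d"
  shows "x < n \<Longrightarrow> (\<Sum>y<n. W n E k x y) = real d ^ k"
proof (induction k)
  case 0
  then show ?case by simp
next
  case (Suc k)
  have "(\<Sum>y<n. W n E (Suc k) x y) = (\<Sum>y<n. \<Sum>z<n. W n E k x z * Aind E z y)"
    by simp
  also have "\<dots> = (\<Sum>z<n. \<Sum>y<n. W n E k x z * Aind E z y)" by (rule sum.swap)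
  also have "\<dots> = (\<Sum>z<n. W n E k x z * (\<Sum>y<n. Aind E z y))"
    by (simp add: sum_distrib_left)
  also have "\<dots> = (\<Sum>z<n. W n E k x z * d)" using row_sum[OF reg] by simp
  also have "\<dots> = real d ^ Suc k" using Suc by (simp add: sum_distrib_right[symmetric])
  finally show ?case .
qed

definition Tk :: "nat \<Rightarrow> (nat \<times> nat) set \<Rightarrow> nat \<Rightarrow> (nat \<Rightarrow> real) \<Rightarrow> nat \<Rightarrow> real" where
  "Tk n E k g x = (\<Sum>y<n. W n E k x y * g y)"

lemma Tk_0: "x < n \<Longrightarrow> Tk n E 0 g x = g x"
  unfolding Tk_def by (simp add: delta_l)

lemma Tk_comp:
  assumes reg: "regular_graph n E d" and x: "x < n"
  shows "Tk n E a (Tk n E b g) x = Tk n E (a + b) g x"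
proof -
  have "Tk n E a (Tk n E b g) x = (\<Sum>y<n. \<Sum>z<n. W n E a x y * W n E b y z * g z)"
    unfolding Tk_def by (simp add: sum_distrib_left mult_ac)
  also have "\<dots> = (\<Sum>z<n. \<Sum>y<n. W n E a x y * W n E b y z * g z)" by (rule sum.swap)
  also have "\<dots> = (\<Sum>z<n. W n E (a+b) x z * g z)"
    using W_add[OF reg x] by (simp add: sum_distrib_right)
  finally show ?thesis unfolding Tk_def .
qed

lemma Tk_inner:
  assumes reg: "regular_graph n E d"
  shows "(\<Sum>x<n. f x * Tk n E k g x) = (\<Sum>y<n. Tk n E k f y * g y)"
proof -
  have "(\<Sum>x<n. f x * Tk n E k g x) = (\<Sum>x<n. \<Sum>y<n. f x * W n E k x y * g y)"
    unfolding Tk_def by (simp add: sum_distrib_left mult_ac)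
  also have "\<dots> = (\<Sum>y<n. \<Sum>x<n. f x * W n E k x y * g y)" by (rule sum.swap)
  also have "\<dots> = (\<Sum>y<n. Tk n E k f y * g y)"
    unfolding Tk_def sum_distrib_right
    by (intro sum.cong refl) (simp add: W_sym[OF reg] mult_ac)
  finally show ?thesis .
qed

definition q2 :: "nat \<Rightarrow> (nat \<Rightarrow> real) \<Rightarrow> real" where
  "q2 n g = (\<Sum>x<n. (g x)^2)"

lemma q2_nn: "q2 n g \<ge> 0" unfolding q2_def by (simp add: sum_nonneg)

lemma q_sq:
  assumes reg: "regular_graph n E d"
  shows "(q2 n (Tk n E k g))^2 \<le> q2 n (Tk n E (2*k) g) * q2 n g"
proof -
  have "q2 n (Tk n E k g) = (\<Sum>x<n. Tk n E k g x * Tk n E k g x)" unfolding q2_def by (simp add: power2_eq_square)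
  also have "\<dots> = (\<Sum>y<n. Tk n E k (Tk n E k g) y * g y)" by (rule Tk_inner[OF reg])
  also have "\<dots> = (\<Sum>y<n. Tk n E (2*k) g y * g y)"
    by (intro sum.cong refl) (simp add: Tk_comp[OF reg] mult_2)
  finally have e: "q2 n (Tk n E k g) = (\<Sum>y<n. Tk n E (2*k) g y * g y)" .
  show ?thesis unfolding e using Cauchy_Schwarz_ineq_sum[of "Tk n E (2*k) g" g "{..<n}"]
    by (simp add: q2_def)
qed

lemma q_chain:
  assumes reg: "regular_graph n E d"
  shows "q2 n (Tk n E 1 g) ^ (2^m) \<le> q2 n g ^ (2^m - 1) * q2 n (Tk n E (2^m) g)"
proof (induction m)
  case 0
  then show ?case by simp
next
  case (Suc m)
  let ?q = "\<lambda>k. q2 n (Tk n E k g)"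
  have e1: "(2::nat)^Suc m = 2^m * 2" by simp
  have "?q 1 ^ (2^Suc m) = (?q 1 ^ (2^m))^2" by (simp only: e1 power_mult)
  also have "\<dots> \<le> (q2 n g ^ (2^m - 1) * ?q (2^m))^2"
    by (rule power_mono[OF Suc]) (simp add: q2_nn)
  also have "\<dots> = (q2 n g ^ (2^m - 1))^2 * (?q (2^m))^2"
    by (simp only: power_mult_distrib)
  also have "\<dots> \<le> (q2 n g ^ (2^m - 1))^2 * (?q (2 * 2^m) * q2 n g)"
    by (rule mult_left_mono[OF q_sq[OF reg]]) simp
  also have "\<dots> = q2 n g ^ (2^Suc m - 1) * ?q (2^Suc m)"
  proof -
    have p: "(1::nat) \<le> 2^m" by simp
    have "(2^m - 1) * 2 + 1 = (2^Suc m - 1::nat)" using p e1 by arith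
    hence "(q2 n g ^ (2^m - 1))^2 * q2 n g = q2 n g ^ (2^Suc m - 1)"
      by (metis power_add power_one_right power_mult)
    moreover have "(2::nat) * 2^m = 2^Suc m" by simp
    ultimately show ?thesis by (metis mult.assoc mult.commute)
  qed
  finally show ?case .
qed

lemma q_trace:
  assumes reg: "regular_graph n E d" and se: "spectral_expander n E lam" and n0: "n > 0"
    and g0: "(\<Sum>y<n. g y) = 0"
  shows "q2 n (Tk n E K g) \<le> (n * lam^(2*K)) * q2 n g"
proof -
  define c where "c = real d ^ K / n"
  have nc: "n * c = real d ^ K" unfolding c_def using n0 by simp
  have Tk_c: "Tk n E K g x = (\<Sum>y<n. (W n E K x y - c) * g y)" for x
  proof -
    have "(\<Sum>y<n. (W n E K x y - c) * g y) = Tk n E K g x - c * (\<Sum>y<n. g y)"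
      unfolding Tk_def by (simp add: algebra_simps sum_subtractf sum_distrib_left)
    thus ?thesis using g0 by simp
  qed
  have "q2 n (Tk n E K g) = (\<Sum>x<n. (\<Sum>y<n. (W n E K x y - c) * g y)^2)"
    unfolding q2_def Tk_c ..
  also have "\<dots> \<le> (\<Sum>x<n. (\<Sum>y<n. (W n E K x y - c)^2) * q2 n g)"
    unfolding q2_def by (intro sum_mono Cauchy_Schwarz_ineq_sum)
  also have "\<dots> = (\<Sum>x<n. \<Sum>y<n. (W n E K x y - c)^2) * q2 n g"
    by (simp add: sum_distrib_right)
  finally have A: "q2 n (Tk n E K g) \<le> (\<Sum>x<n. \<Sum>y<n. (W n E K x y - c)^2) * q2 n g" .
  have B: "(\<Sum>x<n. \<Sum>y<n. (W n E K x y - c)^2) = (\<Sum>x<n. \<Sum>y<n. (W n E K x y)^2) - real d ^ (2*K)"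
  proof -
    have "(\<Sum>x<n. \<Sum>y<n. (W n E K x y - c)^2)
        = (\<Sum>x<n. (\<Sum>y<n. (W n E K x y)^2) - 2 * c * (\<Sum>y<n. W n E K x y) + n * c^2)"
      by (intro sum.cong refl)
        (simp add: power2_diff sum_subtractf sum.distrib sum_distrib_left algebra_simps)
    also have "\<dots> = (\<Sum>x<n. (\<Sum>y<n. (W n E K x y)^2) - 2 * c * real d ^ K + n * c^2)"
      by (intro sum.cong refl) (simp add: W_rowsum[OF reg])
    also have "\<dots> = (\<Sum>x<n. \<Sum>y<n. (W n E K x y)^2) - n * (2 * c * real d ^ K) + n * (n * c^2)"
      by (simp add: sum_subtractf sum.distrib)
    also have "\<dots> = (\<Sum>x<n. \<Sum>y<n. (W n E K x y)^2) - real d ^ (2*K)"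
    proof -
      have h1: "real n * (2 * c * real d ^ K) = 2 * (real d ^ K)^2"
        by (simp add: nc[symmetric] power2_eq_square algebra_simps)
      have h2: "real n * (real n * c^2) = (real d ^ K)^2"
        by (simp add: nc[symmetric] power2_eq_square algebra_simps)
      have h3: "real d ^ (2*K) = (real d ^ K)^2" by (rule power_even_eq)
      show ?thesis using h1 h2 h3 by linarith
    qed
    finally show ?thesis .
  qed
  have C: "(\<Sum>x<n. \<Sum>y<n. (W n E K x y)^2) = (\<Sum>x<n. W n E (K + K) x x)"
  proof (intro sum.cong refl)
    fix x assume x: "x \<in> {..<n}"
    have "(\<Sum>y<n. (W n E K x y)^2) = (\<Sum>y<n. W n E K x y * W n E K y x)"
      using x by (intro sum.cong refl) (simp add: power2_eq_square W_sym[OF reg])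
    also have "\<dots> = W n E (K + K) x x" using W_add[OF reg] x by simp
    finally show "(\<Sum>y<n. (W n E K x y)^2) = W n E (K + K) x x" .
  qed
  let ?ge = "graph_eigenvalues n E"
  have D: "(\<Sum>x<n. W n E (K + K) x x) = real d ^ (2*K) + (\<Sum>i\<in>{1..<n}. (?ge ! i) ^ (2*K))"
  proof -
    have "(\<Sum>x<n. W n E (K + K) x x) = (\<Sum>i<n. (?ge ! i) ^ (2*K))"
      using graph_spec(2)[OF reg n0, of "K+K"] by (simp add: mult_2)
    also have "\<dots> = (?ge ! 0) ^ (2*K) + (\<Sum>i\<in>{1..<n}. (?ge ! i) ^ (2*K))"
      using n0 by (simp add: lessThan_atLeast0 sum.atLeast_Suc_lessThan)
    finally show ?thesis using graph_spec(3)[OF reg n0] by simp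
  qed
  have F: "(\<Sum>i\<in>{1..<n}. (?ge ! i) ^ (2*K)) \<le> n * lam^(2*K)"
  proof -
    have "(\<Sum>i\<in>{1..<n}. (?ge ! i) ^ (2*K)) \<le> (\<Sum>i\<in>{1..<n}. lam ^ (2*K))"
    proof (rule sum_mono)
      fix i assume i: "i \<in> {1..<n}"
      have "\<bar>?ge ! i\<bar> \<le> lam" using se i unfolding spectral_expander_def by auto
      hence "\<bar>?ge ! i\<bar> ^ (2*K) \<le> lam ^ (2*K)" by (rule power_mono) simp
      moreover have "\<bar>?ge ! i\<bar> ^ (2*K) = (?ge ! i) ^ (2*K)" by (rule power_even_abs) simp
      ultimately show "(?ge ! i) ^ (2*K) \<le> lam ^ (2*K)" by simp
    qed
    also have "\<dots> = (n - 1) * lam ^ (2*K)" by simp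
    also have "\<dots> \<le> n * lam ^ (2*K)" by (intro mult_right_mono) (auto simp: power_mult)
    finally show ?thesis .
  qed
  have "(\<Sum>x<n. \<Sum>y<n. (W n E K x y - c)^2) \<le> n * lam^(2*K)" using B C D F by simp
  with A show ?thesis by (meson order.trans mult_right_mono q2_nn)
qed

lemma pow_le_one:
  fixes r :: real
  assumes r: "r \<ge> 0" and b: "\<And>m. r ^ (2^m) \<le> C"
  shows "r \<le> 1"
proof (rule ccontr)
  assume "\<not> r \<le> 1"
  hence r1: "r > 1" by simp
  obtain m :: nat where m: "C / (r - 1) < m" using reals_Archimedean2 by blast
  have "real m < 2^m"
  proof -
    have "m < 2^m" by (rule less_exp)
    hence "real m < real (2^m)" by linarith
    thus ?thesis by simp
  qed
  hence "C / (r - 1) < 2^m" using m by linarith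
  hence "C < 2^m * (r - 1)" using r1 by (simp add: divide_less_eq)
  also have "\<dots> \<le> 1 + real (2^m) * (r - 1)" by simp
  also have "\<dots> \<le> (1 + (r - 1)) ^ (2^m)" by (rule Bernoulli_inequality) (use r1 in simp)
  also have "\<dots> = r ^ (2^m)" by simp
  finally show False using b[of m] by simp
qed

lemma op_bound:
  assumes reg: "regular_graph n E d" and se: "spectral_expander n E lam" and n0: "n > 0"
    and lam: "lam > 0" and g0: "(\<Sum>y<n. g y) = 0"
  shows "q2 n (Tk n E 1 g) \<le> lam^2 * q2 n g"
proof (cases "q2 n g = 0")
  case True
  have "q2 n (Tk n E 1 g) \<le> (n * lam^(2*1)) * q2 n g" by (rule q_trace[OF reg se n0 g0])
  thus ?thesis using True by simp
next
  case False
  hence qp: "q2 n g > 0" using q2_nn[of n g] by simp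
  define r where "r = q2 n (Tk n E 1 g) / (lam^2 * q2 n g)"
  have "r \<le> 1"
  proof (rule pow_le_one)
    show "r \<ge> 0" unfolding r_def using q2_nn lam qp by simp
    fix m :: nat
    have "q2 n (Tk n E 1 g) ^ (2^m) \<le> q2 n g ^ (2^m - 1) * q2 n (Tk n E (2^m) g)"
      by (rule q_chain[OF reg])
    also have "\<dots> \<le> q2 n g ^ (2^m - 1) * ((n * lam^(2*2^m)) * q2 n g)"
      by (rule mult_left_mono[OF q_trace[OF reg se n0 g0]]) (simp add: q2_nn)
    also have "\<dots> = n * (lam^2 * q2 n g) ^ (2^m)"
    proof -
      have "q2 n g ^ (2^m - 1) * q2 n g = q2 n g ^ (2^m)"
        by (metis power_minus_mult zero_less_power pos2 )
      thus ?thesis by (simp add: power_mult_distrib power_mult mult_ac)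
    qed
    finally have "q2 n (Tk n E 1 g) ^ (2^m) \<le> n * (lam^2 * q2 n g) ^ (2^m)" .
    thus "r ^ (2^m) \<le> n" unfolding r_def using lam qp
      by (simp add: power_divide divide_le_eq)
  qed
  thus ?thesis unfolding r_def using lam qp by (simp add: divide_le_eq)
qed


lemma center:
  assumes n0: "n > 0"
  shows "(\<Sum>x<n. f x - (\<Sum>y<n. f y) / n) = 0"
    "q2 n (\<lambda>x. f x - (\<Sum>y<n. f y) / n) \<le> q2 n f"
proof -
  define m where "m = (\<Sum>y<n. f y) / n"
  have sm: "(\<Sum>y<n. f y) = n * m" using n0 unfolding m_def by simp
  have "(\<Sum>x<n. f x - m) = 0" by (simp add: sum_subtractf sm)
  thus "(\<Sum>x<n. f x - (\<Sum>y<n. f y) / n) = 0" unfolding m_def .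
  have pt: "(f x - m)^2 = (f x)^2 - 2 * m * f x + m^2" for x by (simp add: power2_diff mult_ac)
  have "q2 n (\<lambda>x. f x - m) = (\<Sum>x<n. (f x)^2 - 2 * m * f x + m^2)"
    unfolding q2_def by (simp only: pt)
  also have "\<dots> = (\<Sum>x<n. (f x)^2) - (\<Sum>x<n. 2 * m * f x) + (\<Sum>x<n. m^2)"
    by (simp only: sum.distrib sum_subtractf)
  also have "\<dots> = (\<Sum>x<n. (f x)^2) - 2 * m * (\<Sum>x<n. f x) + n * m^2"
    by (simp add: sum_distrib_left)
  also have "\<dots> = (\<Sum>x<n. (f x)^2) - n * m^2"
  proof -
    have "2 * m * (\<Sum>x<n. f x) = 2 * (n * m^2)" unfolding sm by (simp add: power2_eq_square)
    thus ?thesis by linarith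
  qed
  also have "\<dots> \<le> q2 n f" unfolding q2_def by simp
  finally show "q2 n (\<lambda>x. f x - (\<Sum>y<n. f y) / n) \<le> q2 n f" unfolding m_def .
qed

lemma col_sum:
  assumes reg: "regular_graph n E d" "y < n"
  shows "(\<Sum>x<n. Aind E x y) = d"
  using row_sum[OF reg] Aind_sym[OF reg(1)] by simp

lemma cs_abs:
  fixes f g :: "nat \<Rightarrow> real"
  shows "\<bar>\<Sum>x<n. f x * g x\<bar> \<le> sqrt (q2 n f) * sqrt (q2 n g)"
proof -
  have "(\<Sum>x<n. f x * g x)^2 \<le> q2 n f * q2 n g"
    unfolding q2_def by (rule Cauchy_Schwarz_ineq_sum)
  hence "sqrt ((\<Sum>x<n. f x * g x)^2) \<le> sqrt (q2 n f * q2 n g)" by (rule real_sqrt_le_mono)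
  thus ?thesis by (simp add: real_sqrt_mult)
qed

lemma W_one': "x < n \<Longrightarrow> W n E (Suc 0) x y = Aind E x y"
  using W_one by simp

lemma eml_vec:
  assumes reg: "regular_graph n E d" and se: "spectral_expander n E lam" and n0: "n > 0"
    and lam: "lam > 0"
  shows "\<bar>(\<Sum>x<n. \<Sum>y<n. Aind E x y * f x * g y) - d / n * (\<Sum>x<n. f x) * (\<Sum>y<n. g y)\<bar>
          \<le> lam * sqrt (q2 n f) * sqrt (q2 n g)"
proof -
  define mf where "mf = (\<Sum>y<n. f y) / n"
  define mg where "mg = (\<Sum>y<n. g y) / n"
  define f0 where "f0 = (\<lambda>x. f x - mf)"
  define g0 where "g0 = (\<lambda>x. g x - mg)"
  have sf0: "(\<Sum>x<n. f0 x) = 0" and qf0: "q2 n f0 \<le> q2 n f"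
    using center[OF n0, of f] unfolding f0_def mf_def by auto
  have sg0: "(\<Sum>x<n. g0 x) = 0" and qg0: "q2 n g0 \<le> q2 n g"
    using center[OF n0, of g] unfolding g0_def mg_def by auto
  have t1: "(\<Sum>x<n. \<Sum>y<n. Aind E x y * f0 x) = 0"
  proof -
    have "(\<Sum>x<n. \<Sum>y<n. Aind E x y * f0 x) = (\<Sum>x<n. f0 x * (\<Sum>y<n. Aind E x y))"
      by (simp add: sum_distrib_left mult.commute)
    also have "\<dots> = (\<Sum>x<n. f0 x * d)" using row_sum[OF reg] by simp
    also have "\<dots> = 0" using sf0 by (simp add: sum_distrib_right[symmetric])
    finally show ?thesis .
  qed
  have t2: "(\<Sum>x<n. \<Sum>y<n. Aind E x y * g0 y) = 0"
  proof -
    have "(\<Sum>x<n. \<Sum>y<n. Aind E x y * g0 y) = (\<Sum>y<n. \<Sum>x<n. Aind E x y * g0 y)" by (rule sum.swap)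
    also have "\<dots> = (\<Sum>y<n. g0 y * (\<Sum>x<n. Aind E x y))"
      by (simp add: sum_distrib_left mult.commute)
    also have "\<dots> = (\<Sum>y<n. g0 y * d)" using col_sum[OF reg] by simp
    also have "\<dots> = 0" using sg0 by (simp add: sum_distrib_right[symmetric])
    finally show ?thesis .
  qed
  have t3: "(\<Sum>x<n. \<Sum>y<n. Aind E x y) = n * d" using row_sum[OF reg] by simp
  have split: "(\<Sum>x<n. \<Sum>y<n. Aind E x y * f x * g y)
      = (\<Sum>x<n. \<Sum>y<n. Aind E x y * f0 x * g0 y) + mg * (\<Sum>x<n. \<Sum>y<n. Aind E x y * f0 x)
        + mf * (\<Sum>x<n. \<Sum>y<n. Aind E x y * g0 y) + mf * mg * (\<Sum>x<n. \<Sum>y<n. Aind E x y)"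
  proof -
    have pt: "Aind E x y * f x * g y = Aind E x y * f0 x * g0 y + mg * (Aind E x y * f0 x)
        + mf * (Aind E x y * g0 y) + mf * mg * Aind E x y" for x y
      unfolding f0_def g0_def by (simp add: algebra_simps)
    show ?thesis by (simp only: pt sum.distrib sum_distrib_left)
  qed
  have main: "(\<Sum>x<n. \<Sum>y<n. Aind E x y * f x * g y) - d / n * (\<Sum>x<n. f x) * (\<Sum>y<n. g y)
      = (\<Sum>x<n. f0 x * Tk n E 1 g0 x)"
  proof -
    have "mf * mg * (n * d) = d / n * (\<Sum>x<n. f x) * (\<Sum>y<n. g y)"
      unfolding mf_def mg_def using n0 by (simp add: field_simps power2_eq_square)
    moreover have "(\<Sum>x<n. \<Sum>y<n. Aind E x y * f0 x * g0 y) = (\<Sum>x<n. f0 x * Tk n E 1 g0 x)"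
      unfolding Tk_def by (intro sum.cong refl) (simp add: W_one' sum_distrib_left mult_ac del: W.simps)
    ultimately show ?thesis using split t1 t2 t3 by simp
  qed
  have "\<bar>\<Sum>x<n. f0 x * Tk n E 1 g0 x\<bar> \<le> sqrt (q2 n f0) * sqrt (q2 n (Tk n E 1 g0))"
    by (rule cs_abs)
  also have "\<dots> \<le> sqrt (q2 n f) * (lam * sqrt (q2 n g))"
  proof (rule mult_mono)
    show "sqrt (q2 n f0) \<le> sqrt (q2 n f)" by (rule real_sqrt_le_mono[OF qf0])
    have "sqrt (q2 n (Tk n E 1 g0)) \<le> sqrt (lam^2 * q2 n g0)"
      by (rule real_sqrt_le_mono[OF op_bound[OF reg se n0 lam sg0]])
    also have "sqrt (lam^2 * q2 n g0) = lam * sqrt (q2 n g0)"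
      using lam by (simp add: real_sqrt_mult)
    also have "lam * sqrt (q2 n g0) \<le> lam * sqrt (q2 n g)"
      by (rule mult_left_mono[OF real_sqrt_le_mono[OF qg0]]) (use lam in simp)
    finally show "sqrt (q2 n (Tk n E 1 g0)) \<le> lam * sqrt (q2 n g)" .
    show "0 \<le> sqrt (q2 n f)" using q2_nn[of n f] by simp
    show "0 \<le> sqrt (q2 n (Tk n E 1 g0))" using q2_nn[of n "Tk n E 1 g0"] by simp
  qed
  finally have fin: "\<bar>\<Sum>x<n. f0 x * Tk n E 1 g0 x\<bar> \<le> sqrt (q2 n f) * (lam * sqrt (q2 n g))" .
  have eq: "sqrt (q2 n f) * (lam * sqrt (q2 n g)) = lam * sqrt (q2 n f) * sqrt (q2 n g)" by simp
  show ?thesis using fin unfolding main eq .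
qed

definition eST :: "(nat \<times> nat) set \<Rightarrow> nat set \<Rightarrow> nat set \<Rightarrow> real" where
  "eST E S T = (\<Sum>u\<in>S. \<Sum>v\<in>T. Aind E u v)"

lemma restrict_sum: "S \<subseteq> {..<(n::nat)} \<Longrightarrow> (\<Sum>x<n. if x \<in> S then h x else 0) = (\<Sum>x\<in>S. h x)"
proof -
  assume S: "S \<subseteq> {..<n}"
  have "sum h ({..<n} \<inter> S) = (\<Sum>x<n. if x \<in> S then h x else 0)"
    by (rule sum.inter_restrict[OF finite_lessThan])
  thus ?thesis using S by (simp add: Int_absorb1)
qed

lemma eml_set:
  assumes reg: "regular_graph n E d" and se: "spectral_expander n E lam" and n0: "n > 0"
    and lam: "lam > 0" and S: "S \<subseteq> {..<n}" and T: "T \<subseteq> {..<n}"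
  shows "\<bar>eST E S T - d / n * card S * card T\<bar> \<le> lam * sqrt (card S * card T)"
proof -
  define f where "f = (\<lambda>x. if x \<in> S then 1 else (0::real))"
  define g where "g = (\<lambda>x. if x \<in> T then 1 else (0::real))"
  have 1: "(\<Sum>x<n. \<Sum>y<n. Aind E x y * f x * g y) = eST E S T"
  proof -
    have "(\<Sum>x<n. \<Sum>y<n. Aind E x y * f x * g y) = (\<Sum>x<n. if x \<in> S then (\<Sum>y<n. if y \<in> T then Aind E x y else 0) else 0)"
      unfolding f_def g_def by (intro sum.cong refl) (auto intro: sum.cong)
    also have "\<dots> = (\<Sum>x\<in>S. (\<Sum>y<n. if y \<in> T then Aind E x y else 0))" by (rule restrict_sum[OF S])
    also have "\<dots> = eST E S T" unfolding eST_def by (rule sum.cong[OF refl], rule restrict_sum[OF T])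
    finally show ?thesis .
  qed
  have 2: "(\<Sum>x<n. f x) = card S" unfolding f_def using restrict_sum[OF S, of "\<lambda>_. (1::real)"] by simp
  have 3: "(\<Sum>x<n. g x) = card T" unfolding g_def using restrict_sum[OF T, of "\<lambda>_. (1::real)"] by simp
  have "(f x)^2 = f x" for x unfolding f_def by simp
  hence 4: "q2 n f = card S" unfolding q2_def using 2 by simp
  have "(g x)^2 = g x" for x unfolding g_def by simp
  hence 5: "q2 n g = card T" unfolding q2_def using 3 by simp
  from eml_vec[OF reg se n0 lam, of f g] show ?thesis
    unfolding 1 2 3 4 5 by (simp add: real_sqrt_mult)
qed

locale tam =
  fixes n d :: nat and E :: "(nat \<times> nat) set" and lam :: real and g h :: "nat \<Rightarrow> nat"
  assumes reg: "regular_graph n E d" and se: "spectral_expander n E lam" and n0: "n > 0"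
    and lam: "lam > 0" and gV: "\<And>u. u < n \<Longrightarrow> g u < n" and hV: "\<And>u. u < n \<Longrightarrow> h u < n"
begin

definition S where "S x = {u\<in>{..<n}. g u = x}"
definition T where "T y = {v\<in>{..<n}. h v = y}"
definition a where "a x = real (card (S x))"
definition b where "b y = real (card (T y))"
definition tau where "tau x y = d / n * a x * b y - eST E (S x) (T y)"

lemma S_sub: "S x \<subseteq> {..<n}" unfolding S_def by auto
lemma T_sub: "T x \<subseteq> {..<n}" unfolding T_def by auto

lemma fiber_g: "(\<Sum>u<n. F u) = (\<Sum>x<n. \<Sum>u\<in>S x. F u)"
  unfolding S_def by (rule sum.group[symmetric]) (use gV in auto)

lemma fiber_h: "(\<Sum>u<n. F u) = (\<Sum>x<n. \<Sum>u\<in>T x. F u)"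
  unfolding T_def by (rule sum.group[symmetric]) (use hV in auto)

lemma fiber_g': "(\<Sum>u<n. F u (g u)) = (\<Sum>x<n. \<Sum>u\<in>S x. F u x)"
  unfolding fiber_g[of "\<lambda>u. F u (g u)"] by (intro sum.cong refl) (auto simp: S_def)

lemma fiber_h': "(\<Sum>u<n. F u (h u)) = (\<Sum>x<n. \<Sum>u\<in>T x. F u x)"
  unfolding fiber_h[of "\<lambda>u. F u (h u)"] by (intro sum.cong refl) (auto simp: T_def)

lemma sum_a: "(\<Sum>x<n. a x) = n"
  using fiber_g[of "\<lambda>_. (1::real)"] unfolding a_def by simp

lemma sum_b: "(\<Sum>x<n. b x) = n"
  using fiber_h[of "\<lambda>_. (1::real)"] unfolding b_def by simp

lemma a_nn[simp]: "a x \<ge> 0" unfolding a_def by simp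
lemma b_nn[simp]: "b x \<ge> 0" unfolding b_def by simp

lemma I1: "(\<Sum>u<n. \<Sum>v<n. Aind E (g u) (h v)) = (\<Sum>x<n. \<Sum>y<n. Aind E x y * a x * b y)"
proof -
  have "(\<Sum>u<n. \<Sum>v<n. Aind E (g u) (h v)) = (\<Sum>u<n. \<Sum>y<n. \<Sum>v\<in>T y. Aind E (g u) y)"
    by (rule sum.cong[OF refl], rule fiber_h'[of "\<lambda>v y. Aind E (g _) y"])
  also have "\<dots> = (\<Sum>x<n. \<Sum>u\<in>S x. \<Sum>y<n. \<Sum>v\<in>T y. Aind E x y)"
    by (rule fiber_g'[of "\<lambda>u x. \<Sum>y<n. \<Sum>v\<in>T y. Aind E x y"])
  also have "\<dots> = (\<Sum>x<n. \<Sum>y<n. Aind E x y * a x * b y)"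
    by (simp add: a_def b_def sum_distrib_left mult_ac)
  finally show ?thesis .
qed

lemma I2: "(\<Sum>u<n. \<Sum>v<n. Aind E u v * Aind E (g u) (h v)) = (\<Sum>x<n. \<Sum>y<n. Aind E x y * eST E (S x) (T y))"
proof -
  have "(\<Sum>u<n. \<Sum>v<n. Aind E u v * Aind E (g u) (h v)) = (\<Sum>u<n. \<Sum>y<n. \<Sum>v\<in>T y. Aind E u v * Aind E (g u) y)"
    by (rule sum.cong[OF refl], rule fiber_h'[of "\<lambda>v y. Aind E _ v * Aind E (g _) y"])
  also have "\<dots> = (\<Sum>x<n. \<Sum>u\<in>S x. \<Sum>y<n. \<Sum>v\<in>T y. Aind E u v * Aind E x y)"
    by (rule fiber_g'[of "\<lambda>u x. \<Sum>y<n. \<Sum>v\<in>T y. Aind E u v * Aind E x y"])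
  also have "\<dots> = (\<Sum>x<n. \<Sum>y<n. \<Sum>u\<in>S x. \<Sum>v\<in>T y. Aind E x y * Aind E u v)"
    by (rule sum.cong[OF refl], subst sum.swap, simp add: mult.commute)
  also have "\<dots> = (\<Sum>x<n. \<Sum>y<n. Aind E x y * eST E (S x) (T y))"
    by (simp add: eST_def sum_distrib_left)
  finally show ?thesis .
qed

lemma Xdef: "(\<Sum>x<n. \<Sum>y<n. Aind E x y * tau x y)
   = d / n * (\<Sum>u<n. \<Sum>v<n. Aind E (g u) (h v)) - (\<Sum>u<n. \<Sum>v<n. Aind E u v * Aind E (g u) (h v))"
  unfolding I1 I2 tau_def
  by (simp add: right_diff_distrib sum_subtractf sum_distrib_left mult_ac)


lemma eST_nn: "eST E A B \<ge> 0"
  unfolding eST_def Aind_def by (intro sum_nonneg) auto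

lemma tau_le: "tau x y \<le> d / n * a x * b y"
  unfolding tau_def using eST_nn by simp

lemma light:
  fixes t :: real
  assumes t: "t \<ge> 0"
  shows "(\<Sum>x<n. \<Sum>y<n. if a x \<le> t \<or> b y \<le> t then Aind E x y * tau x y else 0) \<le> 2 * d^2 * t"
proof -
  define c where "c = real d / n"
  have c: "c \<ge> 0" unfolding c_def by simp
  have cn: "c * n = d" unfolding c_def using n0 by simp
  have pt: "(if a x \<le> t \<or> b y \<le> t then Aind E x y * tau x y else 0)
      \<le> Aind E x y * c * t * b y + Aind E x y * c * a x * t" for x y
  proof -
    have A0: "Aind E x y \<ge> 0" by (rule Aind_nn)
    have r1: "0 \<le> Aind E x y * c * t * b y" using A0 c t b_nn by simp
    have r2: "0 \<le> Aind E x y * c * a x * t" using A0 c t a_nn by simp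
    show ?thesis
    proof (cases "a x \<le> t \<or> b y \<le> t")
      case True
      have "Aind E x y * tau x y \<le> Aind E x y * (c * a x * b y)"
        using tau_le[of x y] A0 unfolding c_def by (intro mult_left_mono) auto
      also have "\<dots> \<le> Aind E x y * c * t * b y + Aind E x y * c * a x * t"
      proof (cases "a x \<le> t")
        case True
        have "Aind E x y * (c * a x * b y) \<le> Aind E x y * c * t * b y"
          using True A0 c b_nn[of y] by (simp add: mult.assoc mult_left_mono mult_right_mono)
        thus ?thesis using r2 by linarith
      next
        case False
        hence "b y \<le> t" using \<open>a x \<le> t \<or> b y \<le> t\<close> by simp
        hence "Aind E x y * (c * a x * b y) \<le> Aind E x y * c * a x * t"
          using A0 c a_nn[of x] by (simp add: mult.assoc mult_left_mono)
        thus ?thesis using r1 by linarith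
      qed
      finally show ?thesis using True by simp
    next
      case False
      thus ?thesis using r1 r2 by simp
    qed
  qed
  have s1: "(\<Sum>x<n. \<Sum>y<n. Aind E x y * c * t * b y) = c * t * d * n"
  proof -
    have "(\<Sum>x<n. \<Sum>y<n. Aind E x y * c * t * b y) = (\<Sum>y<n. \<Sum>x<n. Aind E x y * c * t * b y)"
      by (rule sum.swap)
    also have "\<dots> = (\<Sum>y<n. c * t * b y * (\<Sum>x<n. Aind E x y))"
      by (simp add: sum_distrib_left mult_ac)
    also have "\<dots> = (\<Sum>y<n. c * t * d * b y)"
      by (intro sum.cong refl) (simp add: col_sum[OF reg])
    also have "\<dots> = c * t * d * n" by (simp add: sum_distrib_left[symmetric] sum_b)
    finally show ?thesis .
  qed
  have s2: "(\<Sum>x<n. \<Sum>y<n. Aind E x y * c * a x * t) = c * t * d * n"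
  proof -
    have "(\<Sum>x<n. \<Sum>y<n. Aind E x y * c * a x * t) = (\<Sum>x<n. c * t * a x * (\<Sum>y<n. Aind E x y))"
      by (simp add: sum_distrib_left mult_ac)
    also have "\<dots> = (\<Sum>x<n. c * t * d * a x)"
      by (intro sum.cong refl) (simp add: row_sum[OF reg])
    also have "\<dots> = c * t * d * n" by (simp add: sum_distrib_left[symmetric] sum_a)
    finally show ?thesis .
  qed
  have "(\<Sum>x<n. \<Sum>y<n. if a x \<le> t \<or> b y \<le> t then Aind E x y * tau x y else 0)
      \<le> (\<Sum>x<n. \<Sum>y<n. Aind E x y * c * t * b y + Aind E x y * c * a x * t)"
    by (intro sum_mono pt)
  also have "\<dots> = c * t * d * n + c * t * d * n" by (simp add: sum.distrib s1 s2)
  also have "\<dots> = 2 * d^2 * t"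
  proof -
    have "c * t * d * n = d^2 * t" using cn by (simp add: power2_eq_square mult_ac)
    thus ?thesis by simp
  qed
  finally show ?thesis .
qed

lemma group_bound:
  assumes Y: "\<And>x. x < n \<Longrightarrow> Y x \<subseteq> {y. y < n \<and> (x,y) \<in> E}"
  shows "(\<Sum>x<n. \<Sum>y\<in>Y x. tau x y) \<le> lam * sqrt n * sqrt (\<Sum>x<n. \<Sum>y\<in>Y x. b y)"
proof -
  define u where "u x = (\<Sum>y\<in>Y x. b y)" for x
  have u_nn: "u x \<ge> 0" for x unfolding u_def by (intro sum_nonneg b_nn)
  have per: "(\<Sum>y\<in>Y x. tau x y) \<le> lam * (sqrt (a x) * sqrt (u x))" if x: "x < n" for x
  proof -
    define U where "U = {v\<in>{..<n}. h v \<in> Y x}"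
    have fY: "finite (Y x)" using Y[OF x] by (rule finite_subset) auto
    have grp: "(\<Sum>v\<in>U. F v) = (\<Sum>y\<in>Y x. \<Sum>v\<in>T y. F v)" for F
    proof -
      have "(\<Sum>y\<in>Y x. sum F {v\<in>U. h v = y}) = sum F U"
        by (rule sum.group) (use fY in \<open>auto simp: U_def\<close>)
      moreover have "{v\<in>U. h v = y} = T y" if "y \<in> Y x" for y
        using that unfolding U_def T_def by auto
      ultimately show ?thesis by simp
    qed
    have cU: "real (card U) = u x"
      using grp[of "\<lambda>_. (1::real)"] unfolding u_def b_def by simp
    have eU: "eST E (S x) U = (\<Sum>y\<in>Y x. eST E (S x) (T y))"
    proof -
      have "eST E (S x) U = (\<Sum>w\<in>S x. \<Sum>y\<in>Y x. \<Sum>v\<in>T y. Aind E w v)"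
        unfolding eST_def by (rule sum.cong[OF refl], rule grp)
      also have "\<dots> = (\<Sum>y\<in>Y x. eST E (S x) (T y))"
        unfolding eST_def by (rule sum.swap)
      finally show ?thesis .
    qed
    have "(\<Sum>y\<in>Y x. tau x y) = d / n * a x * u x - eST E (S x) U"
      unfolding tau_def eU u_def by (simp add: sum_subtractf sum_distrib_left)
    also have "\<dots> \<le> lam * sqrt (a x * u x)"
    proof -
      have "U \<subseteq> {..<n}" unfolding U_def by auto
      from eml_set[OF reg se n0 lam S_sub this, of x]
      show ?thesis unfolding cU[symmetric] a_def by (simp add: abs_le_iff)
    qed
    also have "\<dots> = lam * (sqrt (a x) * sqrt (u x))" by (simp add: real_sqrt_mult)
    finally show ?thesis .
  qed
  have "(\<Sum>x<n. \<Sum>y\<in>Y x. tau x y) \<le> (\<Sum>x<n. lam * (sqrt (a x) * sqrt (u x)))"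
    by (intro sum_mono per) simp
  also have "\<dots> = lam * (\<Sum>x<n. sqrt (a x) * sqrt (u x))" by (simp add: sum_distrib_left)
  also have "\<dots> \<le> lam * (sqrt (q2 n (\<lambda>x. sqrt (a x))) * sqrt (q2 n (\<lambda>x. sqrt (u x))))"
    using cs_abs[where n=n and f="\<lambda>x. sqrt (a x)" and g="\<lambda>x. sqrt (u x)"] lam by (intro mult_left_mono) auto
  also have "q2 n (\<lambda>x. sqrt (a x)) = n" unfolding q2_def using a_nn sum_a by simp
  also have "q2 n (\<lambda>x. sqrt (u x)) = (\<Sum>x<n. u x)" unfolding q2_def using u_nn by simp
  finally show ?thesis unfolding u_def by (simp add: mult_ac)
qed


definition Fa where "Fa t x = (if t < a x then sqrt (a x) else 0)"
definition Fb where "Fb t y = (if t < b y then sqrt (b y) else 0)"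

lemma Hbound:
  fixes t :: real
  assumes P: "\<And>x y. P x y \<Longrightarrow> t < a x \<and> t < b y \<and> b y \<le> a x"
  shows "(\<Sum>x<n. \<Sum>y<n. if P x y then Aind E x y * tau x y else 0)
     \<le> lam * sqrt n * sqrt (\<Sum>x<n. \<Sum>y<n. Aind E x y * Fa t x * Fb t y)"
proof -
  define Y where "Y x = {y. y < n \<and> (x,y) \<in> E \<and> P x y}" for x
  have Ysub: "Y x \<subseteq> {..<n}" for x unfolding Y_def by auto
  have e1: "(\<Sum>y<n. if P x y then Aind E x y * tau x y else 0) = (\<Sum>y\<in>Y x. tau x y)" for x
  proof -
    have "(\<Sum>y<n. if P x y then Aind E x y * tau x y else 0) = (\<Sum>y<n. if y \<in> Y x then tau x y else 0)"
      unfolding Y_def Aind_def by (intro sum.cong refl) auto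
    also have "\<dots> = (\<Sum>y\<in>Y x. tau x y)" by (rule restrict_sum[OF Ysub])
    finally show ?thesis .
  qed
  have e2: "(\<Sum>y\<in>Y x. b y) \<le> (\<Sum>y<n. Aind E x y * Fa t x * Fb t y)" for x
  proof -
    have "(\<Sum>y\<in>Y x. b y) = (\<Sum>y<n. if y \<in> Y x then b y else 0)" by (rule restrict_sum[OF Ysub, symmetric])
    also have "\<dots> \<le> (\<Sum>y<n. Aind E x y * Fa t x * Fb t y)"
    proof (rule sum_mono)
      fix y assume "y \<in> {..<n}"
      have nn: "0 \<le> Aind E x y * Fa t x * Fb t y" unfolding Fa_def Fb_def Aind_def by auto
      show "(if y \<in> Y x then b y else 0) \<le> Aind E x y * Fa t x * Fb t y"
      proof (cases "y \<in> Y x")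
        case True
        hence "P x y" "(x,y) \<in> E" unfolding Y_def by auto
        with P have p: "t < a x" "t < b y" "b y \<le> a x" by auto
        have "b y = sqrt (b y) * sqrt (b y)" using b_nn by simp
        also have "\<dots> \<le> sqrt (a x) * sqrt (b y)" using p by (intro mult_right_mono) auto
        finally show ?thesis using True p \<open>(x,y) \<in> E\<close> unfolding Fa_def Fb_def Aind_def by simp
      next
        case False thus ?thesis using nn by simp
      qed
    qed
    finally show ?thesis .
  qed
  have "(\<Sum>x<n. \<Sum>y<n. if P x y then Aind E x y * tau x y else 0) = (\<Sum>x<n. \<Sum>y\<in>Y x. tau x y)"
    using e1 by simp
  also have "\<dots> \<le> lam * sqrt n * sqrt (\<Sum>x<n. \<Sum>y\<in>Y x. b y)"
    by (rule group_bound) (auto simp: Y_def)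
  also have "\<dots> \<le> lam * sqrt n * sqrt (\<Sum>x<n. \<Sum>y<n. Aind E x y * Fa t x * Fb t y)"
    using lam by (intro mult_left_mono real_sqrt_le_mono sum_mono e2) auto
  finally show ?thesis .
qed

lemma Fa_sq: "(Fa t x)^2 \<le> a x"
  using a_nn[of x] unfolding Fa_def by (cases "t < a x") auto

lemma Fb_sq: "(Fb t x)^2 \<le> b x"
  using b_nn[of x] unfolding Fb_def by (cases "t < b x") auto

lemma Psi_bound:
  fixes t :: real
  assumes t: "t > 0"
  shows "(\<Sum>x<n. \<Sum>y<n. Aind E x y * Fa t x * Fb t y) \<le> d * n / t + lam * n"
proof -
  have Fa_le: "Fa t x \<le> a x / sqrt t" for x
  proof (cases "t < a x")
    case True
    have "sqrt (a x) = a x / sqrt (a x)" using True t by (simp add: real_div_sqrt)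
    also have "\<dots> \<le> a x / sqrt t" using True t a_nn[of x] by (intro divide_left_mono) auto
    finally show ?thesis using True unfolding Fa_def by simp
  qed (use t a_nn in \<open>auto simp: Fa_def\<close>)
  have Fb_le: "Fb t x \<le> b x / sqrt t" for x
  proof (cases "t < b x")
    case True
    have "sqrt (b x) = b x / sqrt (b x)" using True t by (simp add: real_div_sqrt)
    also have "\<dots> \<le> b x / sqrt t" using True t b_nn[of x] by (intro divide_left_mono) auto
    finally show ?thesis using True unfolding Fb_def by simp
  qed (use t b_nn in \<open>auto simp: Fb_def\<close>)
  have Fa_nn: "Fa t x \<ge> 0" for x unfolding Fa_def by simp
  have Fb_nn: "Fb t x \<ge> 0" for x unfolding Fb_def by simp
  have sFa: "(\<Sum>x<n. Fa t x) \<le> n / sqrt t"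
  proof -
    have "(\<Sum>x<n. Fa t x) \<le> (\<Sum>x<n. a x / sqrt t)" by (intro sum_mono Fa_le)
    also have "\<dots> = n / sqrt t" by (simp add: sum_divide_distrib[symmetric] sum_a)
    finally show ?thesis .
  qed
  have sFb: "(\<Sum>x<n. Fb t x) \<le> n / sqrt t"
  proof -
    have "(\<Sum>x<n. Fb t x) \<le> (\<Sum>x<n. b x / sqrt t)" by (intro sum_mono Fb_le)
    also have "\<dots> = n / sqrt t" by (simp add: sum_divide_distrib[symmetric] sum_b)
    finally show ?thesis .
  qed
  have qFa: "q2 n (Fa t) \<le> n"
  proof -
    have "q2 n (Fa t) \<le> (\<Sum>x<n. a x)" unfolding q2_def
      by (intro sum_mono Fa_sq)
    thus ?thesis using sum_a by simp
  qed
  have qFb: "q2 n (Fb t) \<le> n"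
  proof -
    have "q2 n (Fb t) \<le> (\<Sum>x<n. b x)" unfolding q2_def
      by (intro sum_mono Fb_sq)
    thus ?thesis using sum_b by simp
  qed
  have "(\<Sum>x<n. \<Sum>y<n. Aind E x y * Fa t x * Fb t y)
      \<le> d / n * (\<Sum>x<n. Fa t x) * (\<Sum>y<n. Fb t y) + lam * sqrt (q2 n (Fa t)) * sqrt (q2 n (Fb t))"
    using eml_vec[OF reg se n0 lam, of "Fa t" "Fb t"] by (simp add: abs_le_iff)
  also have "\<dots> \<le> d / n * (n / sqrt t) * (n / sqrt t) + lam * sqrt n * sqrt n"
  proof (intro add_mono mult_mono mult_left_mono real_sqrt_le_mono sFa sFb qFa qFb)
  qed (use lam Fa_nn Fb_nn t q2_nn in \<open>auto intro: sum_nonneg mult_nonneg_nonneg\<close>)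
  also have "\<dots> = d * n / t + lam * n" using t n0 by (simp add: power2_eq_square[symmetric] field_simps)
  finally show ?thesis .
qed


lemma eST_sym: "eST E A B = eST E B A"
  unfolding eST_def by (subst sum.swap) (simp add: Aind_sym[OF reg])

lemma X_bound:
  fixes t :: real
  assumes t: "t > 0"
  shows "(\<Sum>x<n. \<Sum>y<n. Aind E x y * tau x y) \<le> 2 * d^2 * t + 2 * (lam * sqrt n * sqrt (d * n / t + lam * n))"
proof -
  interpret sw: tam n d E lam h g
    by unfold_locales (use reg se n0 lam gV hV in auto)
  have swS: "sw.S = T" unfolding sw.S_def T_def by auto
  have swT: "sw.T = S" unfolding sw.T_def S_def by auto
  have swa: "sw.a = b" unfolding sw.a_def b_def swS by auto
  have swb: "sw.b = a" unfolding sw.b_def a_def swT by auto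
  have swtau: "sw.tau y x = tau x y" for x y
    unfolding sw.tau_def tau_def swa swb swS swT by (simp add: eST_sym mult_ac)
  let ?L = "\<lambda>x y. a x \<le> t \<or> b y \<le> t"
  let ?H1 = "\<lambda>x y. t < a x \<and> t < b y \<and> b y \<le> a x"
  let ?H2 = "\<lambda>x y. t < a x \<and> t < b y \<and> a x < b y"
  have pt: "Aind E x y * tau x y = (if ?L x y then Aind E x y * tau x y else 0)
      + (if ?H1 x y then Aind E x y * tau x y else 0) + (if ?H2 x y then Aind E x y * tau x y else 0)" for x y
    by auto
  have "(\<Sum>x<n. \<Sum>y<n. Aind E x y * tau x y) =
      (\<Sum>x<n. \<Sum>y<n. if ?L x y then Aind E x y * tau x y else 0)
      + (\<Sum>x<n. \<Sum>y<n. if ?H1 x y then Aind E x y * tau x y else 0)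
      + (\<Sum>x<n. \<Sum>y<n. if ?H2 x y then Aind E x y * tau x y else 0)"
    by (subst pt) (simp only: sum.distrib)
  also have "\<dots> \<le> 2 * d^2 * t + lam * sqrt n * sqrt (d * n / t + lam * n) + lam * sqrt n * sqrt (d * n / t + lam * n)"
  proof (intro add_mono)
    show "(\<Sum>x<n. \<Sum>y<n. if ?L x y then Aind E x y * tau x y else 0) \<le> 2 * d^2 * t"
      by (rule light) (use t in simp)
    have "(\<Sum>x<n. \<Sum>y<n. if ?H1 x y then Aind E x y * tau x y else 0)
        \<le> lam * sqrt n * sqrt (\<Sum>x<n. \<Sum>y<n. Aind E x y * Fa t x * Fb t y)"
      by (rule Hbound) auto
    also have "\<dots> \<le> lam * sqrt n * sqrt (d * n / t + lam * n)"
      using lam by (intro mult_left_mono real_sqrt_le_mono Psi_bound t) auto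
    finally show "(\<Sum>x<n. \<Sum>y<n. if ?H1 x y then Aind E x y * tau x y else 0)
        \<le> lam * sqrt n * sqrt (d * n / t + lam * n)" .
    have "(\<Sum>x<n. \<Sum>y<n. if ?H2 x y then Aind E x y * tau x y else 0)
        = (\<Sum>y<n. \<Sum>x<n. if ?H2 x y then Aind E x y * tau x y else 0)" by (rule sum.swap)
    also have "\<dots> = (\<Sum>y<n. \<Sum>x<n. if t < sw.a y \<and> t < sw.b x \<and> sw.b x < sw.a y then Aind E y x * sw.tau y x else 0)"
      unfolding swa swb swtau by (intro sum.cong refl) (auto simp: Aind_sym[OF reg])
    also have "\<dots> \<le> lam * sqrt n * sqrt (\<Sum>y<n. \<Sum>x<n. Aind E y x * sw.Fa t y * sw.Fb t x)"
      by (rule sw.Hbound) auto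
    also have "\<dots> \<le> lam * sqrt n * sqrt (d * n / t + lam * n)"
      using lam by (intro mult_left_mono real_sqrt_le_mono sw.Psi_bound t) auto
    finally show "(\<Sum>x<n. \<Sum>y<n. if ?H2 x y then Aind E x y * tau x y else 0)
        \<le> lam * sqrt n * sqrt (d * n / t + lam * n)" .
  qed
  finally show ?thesis by simp
qed

end

lemma prob_two:
  fixes r :: "bool option pmf"
  assumes r: "set_pmf r \<subseteq> {Some True, Some False}"
  shows "measure_pmf.prob r A = (if Some True \<in> A then pmf r (Some True) else 0)
          + (if Some False \<in> A then pmf r (Some False) else 0)"
    "pmf r (Some False) = 1 - pmf r (Some True)"
proof -
  have cong: "measure_pmf.prob r B = measure_pmf.prob r (B \<inter> {Some True, Some False})" for B
    by (rule measure_prob_cong_0) (use r in \<open>auto simp: set_pmf_eq\<close>)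
  have fin: "measure_pmf.prob r B = sum (pmf r) (B \<inter> {Some True, Some False})" for B
    unfolding cong[of B] by (rule measure_measure_pmf_finite) simp
  show "measure_pmf.prob r A = (if Some True \<in> A then pmf r (Some True) else 0)
          + (if Some False \<in> A then pmf r (Some False) else 0)"
  proof -
    have "A \<inter> {Some True, Some False} = (if Some True \<in> A then {Some True} else {}) \<union> (if Some False \<in> A then {Some False} else {})"
      by auto
    thus ?thesis unfolding fin by auto
  qed
  have "1 = measure_pmf.prob r UNIV" by simp
  also have "\<dots> = pmf r (Some True) + pmf r (Some False)" unfolding fin by simp
  finally show "pmf r (Some False) = 1 - pmf r (Some True)" by simp
qed

lemma two_point_sd:
  fixes p q :: "bool option pmf"
  assumes p: "set_pmf p \<subseteq> {Some True, Some False}" and q: "set_pmf q \<subseteq> {Some True, Some False}"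
  shows "stat_dist p q \<le> \<bar>pmf p (Some True) - pmf q (Some True)\<bar>"
  unfolding stat_dist_def
proof (rule cSUP_least)
  fix A :: "bool option set"
  show "\<bar>measure_pmf.prob p A - measure_pmf.prob q A\<bar> \<le> \<bar>pmf p (Some True) - pmf q (Some True)\<bar>"
    unfolding prob_two(1)[OF p] prob_two(1)[OF q] prob_two(2)[OF p] prob_two(2)[OF q]
    by auto
qed simp

lemma split_nm_from_gap:
  assumes reg: "regular_graph n E d" and d0: "0 < d" and dn: "d < n" and eps: "eps \<ge> 0"
    and gap: "\<And>g h. (\<forall>x\<in>{0..<n}. g x \<in> {0..<n}) \<Longrightarrow> (\<forall>y\<in>{0..<n}. h y \<in> {0..<n}) \<Longrightarrow>
      measure_pmf.prob (graph_enc n E False) {(l,r). (g l, h r) \<in> E}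
      - measure_pmf.prob (graph_enc n E True) {(l,r). (g l, h r) \<in> E} \<le> eps"
  shows "split_state_nm (graph_enc n E) (graph_dec E) {0..<n} {0..<n} eps"
proof -
  have Esub: "E \<subseteq> {0..<n} \<times> {0..<n}" using reg unfolding regular_graph_def by auto
  have finE: "finite E" using Esub by (rule finite_subset) simp
  have Ene: "E \<noteq> {}"
  proof
    assume "E = {}"
    hence "card {u. (0, u) \<in> E} = 0" by simp
    moreover have "card {u. (0, u) \<in> E} = d" using reg dn unfolding regular_graph_def by auto
    ultimately show False using d0 by simp
  qed
  define N where "N = {0..<n} \<times> {0..<n} - E"
  have finN: "finite N" unfolding N_def by simp
  have Nne: "N \<noteq> {}"
  proof
    assume "N = {}"
    hence "{0..<n} \<times> {0..<n} \<subseteq> E" unfolding N_def by auto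
    hence "(0,0) \<in> E" using dn by auto
    thus False using reg unfolding regular_graph_def irrefl_def by auto
  qed
  have encT: "graph_enc n E True = pmf_of_set E" unfolding graph_enc_def by simp
  have encF: "graph_enc n E False = pmf_of_set N" unfolding graph_enc_def N_def by simp
  have part1: "set_pmf (graph_enc n E s) \<subseteq> {0..<n} \<times> {0..<n} \<and>
      measure_pmf.prob (graph_enc n E s) {(l, r). graph_dec E l r = Some s} = 1" for s
  proof (cases s)
    case True
    have "measure_pmf.prob (pmf_of_set E) {(l, r). graph_dec E l r = Some True} = 1"
    proof -
      have "E \<inter> {(l, r). graph_dec E l r = Some True} = E" unfolding graph_dec_def by auto
      thus ?thesis using finE Ene by (simp add: measure_pmf_of_set)
    qed
    thus ?thesis using True encT Esub finE Ene by simp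
  next
    case False
    have "measure_pmf.prob (pmf_of_set N) {(l, r). graph_dec E l r = Some False} = 1"
    proof -
      have "N \<inter> {(l, r). graph_dec E l r = Some False} = N" unfolding graph_dec_def N_def by auto
      thus ?thesis using finN Nne by (simp add: measure_pmf_of_set)
    qed
    moreover have "N \<subseteq> {0..<n} \<times> {0..<n}" unfolding N_def by auto
    ultimately show ?thesis using False encF finN Nne by simp
  qed
  have part2: "\<exists>D :: bool nm_out pmf. \<forall>s.
           stat_dist (map_pmf (\<lambda>(l, r). graph_dec E (g l) (h r)) (graph_enc n E s))
                     (map_pmf (nm_outcome s) D) \<le> eps"
    if g: "\<forall>x\<in>{0..<n}. g x \<in> {0..<n}" and h: "\<forall>y\<in>{0..<n}. h y \<in> {0..<n}" for g h
  proof -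
    let ?P = "\<lambda>s. map_pmf (\<lambda>(l, r). graph_dec E (g l) (h r)) (graph_enc n E s)"
    have pre: "(\<lambda>(l, r). graph_dec E (g l) (h r)) -` {Some True} = {(l,r). (g l, h r) \<in> E}"
      unfolding graph_dec_def by auto
    have Pst: "pmf (?P s) (Some True) = measure_pmf.prob (graph_enc n E s) {(l,r). (g l, h r) \<in> E}" for s
      unfolding pmf_map pre ..
    have Pset: "set_pmf (?P s) \<subseteq> {Some True, Some False}" for s
      unfolding graph_dec_def by auto
    define q1 where "q1 = pmf (?P True) (Some True)"
    define q0 where "q0 = pmf (?P False) (Some True)"
    define m where "m = min q0 q1"
    have q1b: "0 \<le> q1" "q1 \<le> 1" unfolding q1_def by (auto simp: pmf_le_1)
    have q0b: "0 \<le> q0" "q0 \<le> 1" unfolding q0_def by (auto simp: pmf_le_1)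
    define xs where "xs = [(Msg True, m), (Same, q1 - m), (Msg False, 1 - q1)]"
    have wf: "pmf_of_list_wf xs"
      unfolding xs_def m_def using q1b q0b by (intro pmf_of_list_wfI) auto
    define D where "D = pmf_of_list xs"
    have Dset: "set_pmf D \<subseteq> {Msg True, Same, Msg False}"
      using set_pmf_of_list[OF wf] unfolding D_def xs_def by auto
    have Qset: "set_pmf (map_pmf (nm_outcome s) D) \<subseteq> {Some True, Some False}" for s
      using Dset unfolding nm_outcome_def by (cases s) auto
    have QT: "pmf (map_pmf (nm_outcome True) D) (Some True) = q1"
      unfolding pmf_map D_def measure_pmf_of_list[OF wf] unfolding xs_def
      by (simp add: nm_outcome_def)
    have QF: "pmf (map_pmf (nm_outcome False) D) (Some True) = m"
      unfolding pmf_map D_def measure_pmf_of_list[OF wf] unfolding xs_def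
      by (simp add: nm_outcome_def)
    have gp: "q0 - q1 \<le> eps" unfolding q0_def q1_def Pst using gap[OF g h] .
    show ?thesis
    proof (intro exI allI)
      fix s
      show "stat_dist (?P s) (map_pmf (nm_outcome s) D) \<le> eps"
      proof (cases s)
        case True
        have "stat_dist (?P s) (map_pmf (nm_outcome s) D) \<le> \<bar>q1 - q1\<bar>"
          using two_point_sd[OF Pset Qset, of s s] True QT unfolding q1_def by simp
        thus ?thesis using eps by simp
      next
        case False
        have "stat_dist (?P s) (map_pmf (nm_outcome s) D) \<le> \<bar>q0 - m\<bar>"
          using two_point_sd[OF Pset Qset, of s s] False QF unfolding q0_def by simp
        also have "\<dots> \<le> eps" using gp eps unfolding m_def by auto
        finally show ?thesis .
      qed
    qed
  qed
  show ?thesis unfolding split_state_nm_def using part1 part2 by blast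
qed

lemma card_pairs:
  assumes R: "R \<subseteq> {..<n} \<times> {..<(n::nat)}"
  shows "real (card R) = (\<Sum>u<n. \<Sum>v<n. if (u,v) \<in> R then 1 else 0)"
proof -
  have "real (card R) = (\<Sum>p\<in>R. 1)" by simp
  also have "\<dots> = (\<Sum>p\<in>{..<n} \<times> {..<n}. if p \<in> R then 1 else 0)"
    using R by (intro sum.mono_neutral_cong_left) auto
  also have "\<dots> = (\<Sum>u<n. \<Sum>v<n. if (u,v) \<in> R then 1 else 0)"
    by (simp add: sum.cartesian_product split_def)
  finally show ?thesis .
qed

lemma alg_gap:
  fixes N M n d :: real
  assumes n: "n > 0" and d: "d > 0" and nd: "n - d > 0"
  shows "(N - M) / (n * n - n * d) - M / (n * d) = (d / n * N - M) / (d * (n - d))"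
proof -
  have e: "n * n - n * d = n * (n - d)" by (simp add: algebra_simps)
  have "n - d \<noteq> 0" using nd by simp
  thus ?thesis unfolding e using n d by (simp add: field_simps)
qed

context tam
begin

lemma gap_eq:
  assumes d0: "0 < d" and dn: "d < n"
  shows "measure_pmf.prob (graph_enc n E False) {(l,r). (g l, h r) \<in> E}
      - measure_pmf.prob (graph_enc n E True) {(l,r). (g l, h r) \<in> E}
      = (\<Sum>x<n. \<Sum>y<n. Aind E x y * tau x y) / (real d * (real n - real d))"
proof -
  let ?Q = "{(l,r). (g l, h r) \<in> E}"
  define N where "N = {0..<n} \<times> {0..<n} - E"
  have Esub: "E \<subseteq> {..<n} \<times> {..<n}" using reg_facts(1)[OF reg] .
  have finE: "finite E" using Esub by (rule finite_subset) simp
  have Ene: "E \<noteq> {}"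
  proof
    assume "E = {}"
    hence "card {u. (0, u) \<in> E} = 0" by simp
    moreover have "card {u. (0, u) \<in> E} = d" using reg_facts(4)[OF reg, of 0] dn by auto
    ultimately show False using d0 by simp
  qed
  have finN: "finite N" unfolding N_def by simp
  have Nne: "N \<noteq> {}"
  proof
    assume "N = {}"
    hence "{0..<n} \<times> {0..<n} \<subseteq> E" unfolding N_def by auto
    hence "(0,0) \<in> E" using dn by auto
    thus False using reg_facts(3)[OF reg] by auto
  qed
  define Nn where "Nn = (\<Sum>u<n. \<Sum>v<n. Aind E (g u) (h v))"
  define M where "M = (\<Sum>u<n. \<Sum>v<n. Aind E u v * Aind E (g u) (h v))"
  have cE: "real (card E) = real n * real d"
  proof -
    have "real (card E) = (\<Sum>u<n. \<Sum>v<n. Aind E u v)"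
      unfolding card_pairs[OF Esub] Aind_def ..
    also have "\<dots> = real n * real d" using row_sum[OF reg] by simp
    finally show ?thesis .
  qed
  have cN: "real (card N) = real n * real n - real n * real d"
  proof -
    have "card N = card ({0..<n} \<times> {0..<n}) - card E"
      unfolding N_def by (rule card_Diff_subset[OF finE]) (use Esub in auto)
    moreover have "card E \<le> card ({0..<n} \<times> {0..<n})"
      by (rule card_mono) (use Esub in auto)
    ultimately have a: "real (card N) = real (card ({0..<n} \<times> {0..<n})) - real (card E)" by (simp add: of_nat_diff)
    have b: "real (card ({0..<n} \<times> {0..<n})) = real n * real n" by simp
    show ?thesis using a b cE by linarith
  qed
  have cEQ: "real (card (E \<inter> ?Q)) = M"
  proof -
    have "real (card (E \<inter> ?Q)) = (\<Sum>u<n. \<Sum>v<n. if (u,v) \<in> E \<inter> ?Q then 1 else 0)"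
      by (rule card_pairs) (use Esub in auto)
    also have "\<dots> = M" unfolding M_def Aind_def by (intro sum.cong refl) auto
    finally show ?thesis .
  qed
  have cNQ: "real (card (N \<inter> ?Q)) = Nn - M"
  proof -
    have "real (card (N \<inter> ?Q)) = (\<Sum>u<n. \<Sum>v<n. if (u,v) \<in> N \<inter> ?Q then 1 else 0)"
      by (rule card_pairs) (auto simp: N_def)
    also have "\<dots> = (\<Sum>u<n. \<Sum>v<n. Aind E (g u) (h v) - Aind E u v * Aind E (g u) (h v))"
      unfolding N_def Aind_def by (intro sum.cong refl) auto
    also have "\<dots> = Nn - M" unfolding Nn_def M_def by (simp add: sum_subtractf)
    finally show ?thesis .
  qed
  have p1: "measure_pmf.prob (graph_enc n E True) ?Q = M / (real n * real d)"
    unfolding graph_enc_def using finE Ene by (simp add: measure_pmf_of_set cEQ cE)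
  have p0: "measure_pmf.prob (graph_enc n E False) ?Q = (Nn - M) / (real n * real n - real n * real d)"
  proof -
    have "graph_enc n E False = pmf_of_set N" unfolding graph_enc_def N_def by simp
    thus ?thesis using finN Nne by (simp add: measure_pmf_of_set cNQ cN)
  qed
  have X: "(\<Sum>x<n. \<Sum>y<n. Aind E x y * tau x y) = d / n * Nn - M"
    unfolding Xdef Nn_def M_def ..
  have nd: "real n - real d > 0" using dn by simp
  have dd: "real d > 0" using d0 by simp
  have nn: "real n > 0" using n0 by simp
  show ?thesis unfolding p0 p1 X by (rule alg_gap[OF nn dd nd])
qed

end

lemma split_one:
  assumes reg: "regular_graph n E d" and d0: "0 < d" and dn: "d < n"
  shows "split_state_nm (graph_enc n E) (graph_dec E) {0..<n} {0..<n} 1"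
proof (rule split_nm_from_gap[OF reg d0 dn])
  show "(0::real) \<le> 1" by simp
  fix g h :: "nat \<Rightarrow> nat"
  assume g: "\<forall>x\<in>{0..<n}. g x \<in> {0..<n}" and h: "\<forall>y\<in>{0..<n}. h y \<in> {0..<n}"
  have "measure_pmf.prob (graph_enc n E False) {(l,r). (g l, h r) \<in> E} \<le> 1" by simp
  moreover have "measure_pmf.prob (graph_enc n E True) {(l,r). (g l, h r) \<in> E} \<ge> 0" by simp
  ultimately show "measure_pmf.prob (graph_enc n E False) {(l,r). (g l, h r) \<in> E}
      - measure_pmf.prob (graph_enc n E True) {(l,r). (g l, h r) \<in> E} \<le> 1" by linarith
qed

lemma split_good:
  fixes t :: real
  assumes reg: "regular_graph n E d" and se: "spectral_expander n E lam" and lam: "lam > 0"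
    and d0: "0 < d" and dn: "d < n" and t: "t > 0"
    and epsdef: "eps = (2 * d^2 * t + 2 * (lam * sqrt n * sqrt (d * n / t + lam * n))) / (real d * (real n - real d))"
  shows "split_state_nm (graph_enc n E) (graph_dec E) {0..<n} {0..<n} eps"
proof (rule split_nm_from_gap[OF reg d0 dn])
  have den: "real d * (real n - real d) > 0" using d0 dn by simp
  show "0 \<le> eps" unfolding epsdef
    using den t lam by (intro divide_nonneg_pos) auto
  fix g h :: "nat \<Rightarrow> nat"
  assume g: "\<forall>x\<in>{0..<n}. g x \<in> {0..<n}" and h: "\<forall>y\<in>{0..<n}. h y \<in> {0..<n}"
  interpret tam n d E lam g h
    by unfold_locales (use reg se lam dn g h in auto)
  have xb: "(\<Sum>x<n. \<Sum>y<n. Aind E x y * tau x y) \<le> 2 * (real d)^2 * t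
      + 2 * (lam * sqrt (real n) * sqrt (real d * real n / t + lam * real n))"
    using X_bound[OF t] by simp
  show "measure_pmf.prob (graph_enc n E False) {(l,r). (g l, h r) \<in> E}
      - measure_pmf.prob (graph_enc n E True) {(l,r). (g l, h r) \<in> E} \<le> eps"
    unfolding gap_eq[OF d0 dn] epsdef by (rule divide_right_mono[OF xb]) (use den in simp)
qed

lemma lam_lower:
  assumes reg: "regular_graph n E d" and se: "spectral_expander n E lam" and lam: "lam > 0"
    and d2: "2 \<le> d" and n2: "2 * d \<le> n"
  shows "lam \<ge> 1/2"
proof -
  have n0: "n > 0" using d2 n2 by simp
  define Nb where "Nb = {y. (0, y) \<in> E}"
  have Nbsub: "Nb \<subseteq> {..<n}" unfolding Nb_def using reg_facts(1)[OF reg] by auto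
  have cNb: "card Nb = d" unfolding Nb_def using reg_facts(4)[OF reg, of 0] n0 by simp
  have S0: "{0} \<subseteq> {..<n}" using n0 by simp
  have e: "eST E {0} Nb = d"
    unfolding eST_def using cNb by (simp add: Aind_def Nb_def)
  from eml_set[OF reg se n0 lam S0 Nbsub]
  have "\<bar>real d - d / n * d\<bar> \<le> lam * sqrt d" unfolding e cNb by simp
  moreover have "d / n * d \<le> d / 2"
  proof -
    have h1: "real d / real n \<le> 1/2" using n2 n0 by (simp add: divide_simps)
    have "real d / real n * real d \<le> 1/2 * real d" by (rule mult_right_mono[OF h1]) simp
    thus ?thesis by simp
  qed
  ultimately have "d / 2 \<le> lam * sqrt d" by linarith
  moreover have "real d = sqrt d * sqrt d" by simp
  ultimately have "sqrt d * sqrt d \<le> (2 * lam) * sqrt d" by linarith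
  moreover have "sqrt (real d) > 0" using d2 by simp
  ultimately have "sqrt d \<le> 2 * lam" by (rule mult_right_le_imp_le)
  moreover have "sqrt (real d) \<ge> 1" using d2 by simp
  ultimately show ?thesis by linarith
qed


lemma good_bound:
  fixes n d c L lam :: real
  assumes n: "n > 0" and d: "d \<ge> 2" and nd: "2 * d \<le> n" and lam: "lam \<ge> 1/2" and c: "c > 0" and L: "L > 0"
    and key: "c * d^3 * L^4 \<le> lam * n"
  shows "(2 * d^2 * (d / lam) + 2 * (lam * sqrt n * sqrt (d * n / (d / lam) + lam * n))) / (d * (n - d))
     \<le> (12 / (c * L^4) + 6) * (lam * sqrt lam) / d"
proof -
  define P where "P = lam * sqrt lam"
  have lam0: "lam > 0" using lam by simp
  have d0: "d > 0" using d by simp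
  have e1: "d * n / (d / lam) = lam * n" using d0 lam0 by (simp add: field_simps)
  have e2: "sqrt (lam * n + lam * n) = sqrt 2 * sqrt lam * sqrt n"
    by (simp add: real_sqrt_mult[symmetric] algebra_simps)
  have e3: "lam * sqrt n * (sqrt 2 * sqrt lam * sqrt n) = sqrt 2 * P * n"
    using n unfolding P_def by (simp add: algebra_simps)
  have e4: "2 * d^2 * (d / lam) = 2 * d^3 / lam" by (simp add: power2_eq_square power3_eq_cube)
  have num: "2 * d^2 * (d / lam) + 2 * (lam * sqrt n * sqrt (d * n / (d / lam) + lam * n))
      = 2 * d^3 / lam + 2 * sqrt 2 * P * n"
    unfolding e1 e2 e3 e4 by simp
  have num0: "2 * d^3 / lam + 2 * sqrt 2 * P * n \<ge> 0" unfolding P_def using lam0 n d0 by simp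
  have den: "d * (n - d) \<ge> d * n / 2"
  proof -
    have "d * (2 * d) \<le> d * n" using nd d0 by (intro mult_left_mono) auto
    hence "2 * (d * d) \<le> d * n" by (simp add: algebra_simps)
    moreover have "d * (n - d) = d * n - d * d" by (simp add: algebra_simps)
    ultimately show ?thesis by linarith
  qed
  have den0: "d * n / 2 > 0" using d0 n by simp
  have "(2 * d^3 / lam + 2 * sqrt 2 * P * n) / (d * (n - d)) \<le> (2 * d^3 / lam + 2 * sqrt 2 * P * n) / (d * n / 2)"
    by (rule divide_left_mono[OF den num0]) (use den0 den in auto)
  also have "\<dots> = 4 * (d^2 / (lam * n)) + 4 * sqrt 2 * P / d"
    using d0 n lam0 by (simp add: field_simps power2_eq_square power3_eq_cube)
  also have "\<dots> \<le> 4 * (3 * P / (c * L^4 * d)) + 6 * P / d"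
  proof (rule add_mono)
    have P3: "1 \<le> 3 * P"
    proof -
      have "sqrt lam \<ge> sqrt (1/2)" using lam by simp
      moreover have "sqrt (1/2::real) \<ge> 2/3"
        by (rule real_le_rsqrt) (simp add: power2_eq_square)
      ultimately have "sqrt lam \<ge> 2/3" by linarith
      hence "lam * sqrt lam \<ge> 1/2 * (2/3)" using lam by (intro mult_mono) auto
      thus ?thesis unfolding P_def by simp
    qed
    have "d^2 / (lam * n) \<le> d^2 / (c * d^3 * L^4)"
      by (rule divide_left_mono[OF key]) (use c d0 L lam0 n in \<open>auto intro!: mult_pos_pos\<close>)
    also have "\<dots> = 1 / (c * L^4 * d)" using d0 by (simp add: field_simps power2_eq_square power3_eq_cube)
    also have "\<dots> \<le> 3 * P / (c * L^4 * d)"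
      by (rule divide_right_mono[OF P3]) (use c L d0 in simp)
    finally show "4 * (d^2 / (lam * n)) \<le> 4 * (3 * P / (c * L^4 * d))" by simp
    have "sqrt 2 \<le> sqrt ((3/2::real)^2)" by (rule real_sqrt_le_mono) (simp add: power2_eq_square)
    hence "sqrt 2 \<le> (3/2::real)" by simp
    hence "4 * sqrt 2 \<le> (6::real)" by simp
    moreover have "P / d \<ge> 0" unfolding P_def using lam0 d0 by simp
    ultimately have "(4 * sqrt 2) * (P / d) \<le> 6 * (P / d)" by (rule mult_right_mono)
    moreover have "4 * sqrt 2 * P / d = (4 * sqrt 2) * (P / d)" by simp
    moreover have "6 * P / d = 6 * (P / d)" by simp
    ultimately show "4 * sqrt 2 * P / d \<le> 6 * P / d" by linarith
  qed
  also have "\<dots> = (12 / (c * L^4) + 6) * P / d" using c L d0 by (simp add: field_simps)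
  finally show ?thesis unfolding num P_def .
qed


theorem theorem3p3:
  "\<forall>c::real. c > 0 \<longrightarrow>
     (\<exists>C a :: real. C > 0 \<and> a > 0 \<and>
       (\<forall>(n::nat) (d::nat) (E::(nat \<times> nat) set) (lam::real).
          regular_graph n E d \<longrightarrow> 2 \<le> d \<longrightarrow> d < n \<longrightarrow>
          spectral_expander n E lam \<longrightarrow> lam > 0 \<longrightarrow>
          real n \<ge> c * real d ^ 3 * ln (real d) ^ 4 / lam \<longrightarrow>
          (\<exists>eps. split_state_nm (graph_enc n E) (graph_dec E) {0..<n} {0..<n} eps \<and>
                 eps \<le> C * ln (real d) powr a * lam powr (3/2) / real d)))"
proof (intro allI impI)
  fix c :: real
  assume c: "c > 0"
  define L where "L = ln (2::real)"
  have L0: "L > 0" unfolding L_def by simp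
  define k where "k = c * L^4 / 2"
  have k0: "k > 0" unfolding k_def using c L0 by simp
  define K where "K = 12 / (c * L^4) + 6"
  have K0: "K > 0" unfolding K_def using c L0 by (simp add: add_pos_pos)
  define C where "C = K / L + 1 / (L * k * sqrt k)"
  have C1: "C \<ge> K / L" unfolding C_def using L0 k0 by simp
  have C2: "C \<ge> 1 / (L * k * sqrt k)" unfolding C_def using L0 K0 by simp
  have C0: "C > 0" using C1 K0 L0 by (meson divide_pos_pos less_le_trans)
  show "\<exists>C a :: real. C > 0 \<and> a > 0 \<and>
       (\<forall>(n::nat) (d::nat) (E::(nat \<times> nat) set) (lam::real).
          regular_graph n E d \<longrightarrow> 2 \<le> d \<longrightarrow> d < n \<longrightarrow>
          spectral_expander n E lam \<longrightarrow> lam > 0 \<longrightarrow>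
          real n \<ge> c * real d ^ 3 * ln (real d) ^ 4 / lam \<longrightarrow>
          (\<exists>eps. split_state_nm (graph_enc n E) (graph_dec E) {0..<n} {0..<n} eps \<and>
                 eps \<le> C * ln (real d) powr a * lam powr (3/2) / real d))"
  proof (rule exI[of _ C], rule exI[of _ "1::real"], intro conjI allI impI)
    show "C > 0" by (rule C0)
    show "(1::real) > 0" by simp
    fix n d :: nat and E :: "(nat \<times> nat) set" and lam :: real
    assume reg: "regular_graph n E d" and d2: "2 \<le> d" and dn: "d < n"
      and se: "spectral_expander n E lam" and lam: "lam > 0"
      and nb: "real n \<ge> c * real d ^ 3 * ln (real d) ^ 4 / lam"
    have d0: "0 < d" using d2 by simp
    have dr: "real d \<ge> 2" using d2 by simp
    have lnd: "ln (real d) \<ge> L" unfolding L_def using dr by simp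
    have lnd0: "ln (real d) > 0" using lnd L0 by simp
    have pw: "ln (real d) powr 1 = ln (real d)" using lnd0 by simp
    have lp: "lam powr (3/2) = lam * sqrt lam"
    proof -
      have "lam powr (3/2) = lam powr (1 + 1/2)" by simp
      also have "\<dots> = lam powr 1 * lam powr (1/2)" by (rule powr_add)
      also have "\<dots> = lam * sqrt lam" using lam by (simp add: powr_half_sqrt)
      finally show ?thesis .
    qed
    have key: "c * real d ^ 3 * L ^ 4 \<le> lam * real n"
    proof -
      have "c * real d ^ 3 * L ^ 4 \<le> c * real d ^ 3 * ln (real d) ^ 4"
        using c dr lnd L0 by (intro mult_left_mono power_mono) auto
      also have "\<dots> \<le> lam * real n" using nb lam by (simp add: divide_le_eq mult.commute)
      finally show ?thesis .
    qed
    let ?B = "C * ln (real d) powr 1 * lam powr (3/2) / real d"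
    have B: "?B = C * ln (real d) * (lam * sqrt lam) / real d" unfolding pw lp ..
    have CK: "C * ln (real d) \<ge> K"
    proof -
      have "C * ln (real d) \<ge> K / L * L" using C1 lnd K0 L0 C0 by (intro mult_mono) auto
      thus ?thesis using L0 by simp
    qed
    show "\<exists>eps. split_state_nm (graph_enc n E) (graph_dec E) {0..<n} {0..<n} eps \<and> eps \<le> ?B"
    proof (cases "n < 2 * d")
      case True
      have "lam * real n < lam * (2 * real d)" using True lam by simp
      with key have "c * real d ^ 3 * L ^ 4 < lam * (2 * real d)" by linarith
      hence lk: "lam > k * real d ^ 2" unfolding k_def using dr
        by (simp add: power3_eq_cube power2_eq_square field_simps)
      have "sqrt lam \<ge> sqrt (k * real d ^ 2)" using lk by simp
      also have "sqrt (k * real d ^ 2) = sqrt k * real d" by (simp add: real_sqrt_mult)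
      finally have sl: "sqrt lam \<ge> sqrt k * real d" .
      have "lam * sqrt lam \<ge> (k * real d ^ 2) * (sqrt k * real d)"
        using lk sl k0 dr lam by (intro mult_mono) auto
      moreover have "(k * real d ^ 2) * (sqrt k * real d) \<ge> k * sqrt k * real d"
      proof -
        have "real d ^ 2 \<ge> 1" using dr by simp
        hence "k * sqrt k * real d * real d ^ 2 \<ge> k * sqrt k * real d * 1"
          using k0 dr by (intro mult_left_mono) auto
        thus ?thesis by (simp add: mult_ac)
      qed
      ultimately have P: "lam * sqrt lam \<ge> k * sqrt k * real d" by linarith
      have "1 = (1 / (L * k * sqrt k)) * L * (k * sqrt k * real d) / real d"
        using L0 k0 dr by (simp add: field_simps)
      also have "\<dots> \<le> C * ln (real d) * (lam * sqrt lam) / real d"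
      proof (rule divide_right_mono)
        show "1 / (L * k * sqrt k) * L * (k * sqrt k * real d) \<le> C * ln (real d) * (lam * sqrt lam)"
        proof (rule mult_mono)
          show "1 / (L * k * sqrt k) * L \<le> C * ln (real d)"
            using C2 lnd L0 k0 C0 by (intro mult_mono) auto
          show "k * sqrt k * real d \<le> lam * sqrt lam" by (rule P)
          show "0 \<le> C * ln (real d)" using C0 lnd0 by simp
          show "0 \<le> k * sqrt k * real d" using k0 by simp
        qed
      qed (use dr in simp)
      finally have "1 \<le> ?B" unfolding B .
      thus ?thesis using split_one[OF reg d0 dn] by blast
    next
      case False
      hence n2: "2 * d \<le> n" by simp
      have lam2: "lam \<ge> 1/2" by (rule lam_lower[OF reg se lam d2 n2])
      define t where "t = real d / lam"
      have t0: "t > 0" unfolding t_def using d0 lam by simp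
      define eps where "eps = (2 * (real d)^2 * t + 2 * (lam * sqrt (real n) * sqrt (real d * real n / t + lam * real n))) / (real d * (real n - real d))"
      have sp: "split_state_nm (graph_enc n E) (graph_dec E) {0..<n} {0..<n} eps"
        by (rule split_good[OF reg se lam d0 dn t0 eps_def])
      have "eps \<le> K * (lam * sqrt lam) / real d"
        unfolding eps_def t_def K_def
        using good_bound[of "real n" "real d" lam c L] dn dr n2 lam2 c L0 key by simp
      also have "\<dots> \<le> C * ln (real d) * (lam * sqrt lam) / real d"
        using CK lam dr by (intro divide_right_mono mult_right_mono) auto
      finally have "eps \<le> ?B" unfolding B .
      thus ?thesis using sp by blast
    qed
  qed
qed

end
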